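(* Let $G$ be a finitely generated group and $S$ a finite generating set. Then the Cayley graph $Cay(G,S)$ (equivalently $G$) is quasi-isometric to a tree if and only if there exist $i_0,k,m\in\mathbb{N}$ such that $G$ is $(i_0,k,m)$-chordal with respect to $S$.
   Context: $S^{\pm1}=S\cup S^{-1}\setminus\{e\}$; $Cay(G,S)$ has vertex set $G$, edges $\{g,gs\}$ ($s\in S^{\pm1}$), each edge of length 1. A relation $s_1\cdots s_n=e$ with $n>2$, $s_i\in S^{\pm1}$, is simple if $s_p\cdots s_q=e$ holds exactly when $(p,q)=(1,n)$. $G$ is $(i_0,k,m)$-chordal with respect to $S$ if for every simple relation $s_1\cdots s_n=e$ with $n\ge k$ there exist $1\le i\le i_0$, $i<j\le n$ and $s'_1,\dots,s'_r\in S^{\pm1}$ with $s_i\cdots s_j=s'_1\cdots s'_r$ and $r\le\min\{m,\,j-i,\,n-j+i-2\}$. *)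

theory Defs
  imports "HOL-Algebra.Group" "HOL-Algebra.Generated_Groups" Complex_Main
begin

definition sym_gens :: "('g, 'b) monoid_scheme \<Rightarrow> 'g set \<Rightarrow> 'g set" where
  "sym_gens G S = (S \<union> (\<lambda>s. inv\<^bsub>G\<^esub> s) ` S) - {\<one>\<^bsub>G\<^esub>}"

definition word_prod :: "('g, 'b) monoid_scheme \<Rightarrow> 'g list \<Rightarrow> 'g" where
  "word_prod G ws = foldr (\<lambda>a b. a \<otimes>\<^bsub>G\<^esub> b) ws \<one>\<^bsub>G\<^esub>"

text \<open>Subword s_p ... s_q (1-indexed, inclusive).\<close>
definition subword :: "'g list \<Rightarrow> nat \<Rightarrow> nat \<Rightarrow> 'g list" where
  "subword ss p q = take (Suc q - p) (drop (p - 1) ss)"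

text \<open>Path metric of Cay(G,S) restricted to the vertex set G (word metric).\<close>
definition cayley_dist :: "('g, 'b) monoid_scheme \<Rightarrow> 'g set \<Rightarrow> 'g \<Rightarrow> 'g \<Rightarrow> nat" where
  "cayley_dist G S g h =
     (LEAST n. \<exists>ws. length ws = n \<and> set ws \<subseteq> sym_gens G S \<and> g \<otimes>\<^bsub>G\<^esub> word_prod G ws = h)"

definition simple_relation :: "('g, 'b) monoid_scheme \<Rightarrow> 'g set \<Rightarrow> 'g list \<Rightarrow> bool" where
  "simple_relation G S ss \<longleftrightarrow>
     length ss > 2 \<and> set ss \<subseteq> sym_gens G S \<and> word_prod G ss = \<one>\<^bsub>G\<^esub> \<and>
     (\<forall>p q. 1 \<le> p \<and> p \<le> q \<and> q \<le> length ss \<longrightarrow>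
        (word_prod G (subword ss p q) = \<one>\<^bsub>G\<^esub> \<longleftrightarrow> (p, q) = (1, length ss)))"

text \<open>(i0,k,m)-chordality. The bound r \<le> n - j + i - 2 is written as r + j + 2 \<le> n + i
  to avoid truncated subtraction.\<close>
definition chordal :: "('g, 'b) monoid_scheme \<Rightarrow> 'g set \<Rightarrow> nat \<Rightarrow> nat \<Rightarrow> nat \<Rightarrow> bool" where
  "chordal G S i0 k m \<longleftrightarrow>
     (\<forall>ss. simple_relation G S ss \<and> length ss \<ge> k \<longrightarrow>
        (\<exists>i j ts. 1 \<le> i \<and> i \<le> i0 \<and> i < j \<and> j \<le> length ss \<and>
           set ts \<subseteq> sym_gens G S \<and>
           word_prod G (subword ss i j) = word_prod G ts \<and>
           length ts \<le> m \<and> length ts \<le> j - i \<and> length ts + j + 2 \<le> length ss + i))"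

text \<open>Simple graphs on a vertex set V with adjacency E; walks as vertex lists.\<close>
definition is_walk :: "'v set \<Rightarrow> ('v \<Rightarrow> 'v \<Rightarrow> bool) \<Rightarrow> 'v list \<Rightarrow> bool" where
  "is_walk V E xs \<longleftrightarrow> xs \<noteq> [] \<and> set xs \<subseteq> V \<and> (\<forall>i. Suc i < length xs \<longrightarrow> E (xs ! i) (xs ! Suc i))"

definition is_tree :: "'v set \<Rightarrow> ('v \<Rightarrow> 'v \<Rightarrow> bool) \<Rightarrow> bool" where
  "is_tree V E \<longleftrightarrow> V \<noteq> {} \<and>
     (\<forall>u v. E u v \<longrightarrow> u \<in> V \<and> v \<in> V \<and> u \<noteq> v \<and> E v u) \<and>
     (\<forall>u\<in>V. \<forall>v\<in>V. \<exists>!xs. is_walk V E xs \<and> distinct xs \<and> hd xs = u \<and> last xs = v)"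

definition graph_dist :: "'v set \<Rightarrow> ('v \<Rightarrow> 'v \<Rightarrow> bool) \<Rightarrow> 'v \<Rightarrow> 'v \<Rightarrow> nat" where
  "graph_dist V E u v = (LEAST n. \<exists>xs. is_walk V E xs \<and> hd xs = u \<and> last xs = v \<and> length xs = Suc n)"

definition quasi_isometric :: "'a set \<Rightarrow> ('a \<Rightarrow> 'a \<Rightarrow> real) \<Rightarrow> 'c set \<Rightarrow> ('c \<Rightarrow> 'c \<Rightarrow> real) \<Rightarrow> bool" where
  "quasi_isometric A dA B dB \<longleftrightarrow>
     (\<exists>f L C. f ` A \<subseteq> B \<and> L \<ge> 1 \<and> C \<ge> 0 \<and>
        (\<forall>x\<in>A. \<forall>y\<in>A. dA x y / L - C \<le> dB (f x) (f y) \<and> dB (f x) (f y) \<le> L * dA x y + C) \<and>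
        (\<forall>z\<in>B. \<exists>x\<in>A. dB z (f x) \<le> C))"

text \<open>Cay(G,S) is quasi-isometric to a tree. Since G is countable, trees may be taken
  with vertices in nat.\<close>
definition qi_to_tree :: "('g, 'b) monoid_scheme \<Rightarrow> 'g set \<Rightarrow> bool" where
  "qi_to_tree G S \<longleftrightarrow>
     (\<exists>(V :: nat set) E. is_tree V E \<and>
        quasi_isometric (carrier G) (\<lambda>g h. real (cayley_dist G S g h))
                        V (\<lambda>u v. real (graph_dist V E u v)))"

end

theory Submission
  imports Defs "HOL-Library.Countable_Set"
begin



definition wb :: "'v set \<Rightarrow> ('v \<Rightarrow> 'v \<Rightarrow> bool) \<Rightarrow> 'v list \<Rightarrow> 'v \<Rightarrow> 'v \<Rightarrow> bool" where
  "wb V E xs u v \<longleftrightarrow> is_walk V E xs \<and> hd xs = u \<and> last xs = v"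

lemma is_walk_Nil[simp]: "\<not> is_walk V E []"
  by (simp add: is_walk_def)

lemma is_walk_single[simp]: "is_walk V E [x] \<longleftrightarrow> x \<in> V"
  by (simp add: is_walk_def)

lemma is_walk_Cons2[simp]:
  "is_walk V E (x # y # xs) \<longleftrightarrow> x \<in> V \<and> E x y \<and> is_walk V E (y # xs)"
proof
  assume H: "is_walk V E (x # y # xs)"
  have "E x y" using H unfolding is_walk_def by (metis length_Cons nth_Cons_0 nth_Cons_Suc zero_less_Suc Suc_less_eq)
  moreover have "\<forall>i. Suc i < length (y # xs) \<longrightarrow> E ((y # xs) ! i) ((y # xs) ! Suc i)"
  proof (intro allI impI)
    fix i assume "Suc i < length (y # xs)"
    then have "Suc (Suc i) < length (x # y # xs)" by simp
    then have "E ((x # y # xs) ! Suc i) ((x # y # xs) ! Suc (Suc i))" using H unfolding is_walk_def by blast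
    then show "E ((y # xs) ! i) ((y # xs) ! Suc i)" by simp
  qed
  ultimately show "x \<in> V \<and> E x y \<and> is_walk V E (y # xs)" using H unfolding is_walk_def by auto
next
  assume H: "x \<in> V \<and> E x y \<and> is_walk V E (y # xs)"
  show "is_walk V E (x # y # xs)" unfolding is_walk_def
  proof (intro conjI allI impI)
    fix i assume i: "Suc i < length (x # y # xs)"
    show "E ((x # y # xs) ! i) ((x # y # xs) ! Suc i)"
    proof (cases i)
      case 0 then show ?thesis using H by simp
    next
      case (Suc j)
      then have "Suc j < length (y # xs)" using i by simp
      then have "E ((y # xs) ! j) ((y # xs) ! Suc j)" using H unfolding is_walk_def by blast
      then show ?thesis using Suc by simp
    qed
  qed (use H in \<open>auto simp: is_walk_def\<close>)
qed

lemma is_walk_ConsD: "is_walk V E (x # xs) \<Longrightarrow> xs \<noteq> [] \<Longrightarrow> is_walk V E xs"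
  by (cases xs) auto

lemma is_walk_hd_in: "is_walk V E xs \<Longrightarrow> hd xs \<in> V"
  by (cases xs) (auto simp: is_walk_def)

lemma is_walk_set: "is_walk V E xs \<Longrightarrow> set xs \<subseteq> V"
  by (simp add: is_walk_def)

lemma is_walk_append:
  "is_walk V E xs \<Longrightarrow> is_walk V E ys \<Longrightarrow> last xs = hd ys \<Longrightarrow> is_walk V E (xs @ tl ys)"
proof (induction xs rule: induct_list012)
  case 1 then show ?case by simp
next
  case (2 x) then show ?case by (cases ys) auto
next
  case (3 x y zs)
  then have "is_walk V E ((y # zs) @ tl ys)" by simp
  then show ?case using 3 by simp
qed

lemma is_walk_appendD1: "is_walk V E (xs @ ys) \<Longrightarrow> xs \<noteq> [] \<Longrightarrow> is_walk V E xs"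
proof (induction xs rule: induct_list012)
  case (2 x) then show ?case by (cases ys) auto
next
  case (3 x y zs) then show ?case by simp
qed simp

lemma is_walk_appendD2: "is_walk V E (xs @ ys) \<Longrightarrow> ys \<noteq> [] \<Longrightarrow> is_walk V E ys"
proof (induction xs)
  case (Cons x xs) then show ?case by (cases xs; cases ys) auto
qed simp

lemma is_walk_take: "is_walk V E xs \<Longrightarrow> 0 < l \<Longrightarrow> is_walk V E (take l xs)"
  by (metis append_take_drop_id is_walk_appendD1 is_walk_Nil take_eq_Nil gr_implies_not0)

lemma is_walk_drop: "is_walk V E xs \<Longrightarrow> i < length xs \<Longrightarrow> is_walk V E (drop i xs)"
  by (metis append_take_drop_id is_walk_appendD2 drop_eq_Nil not_le)

lemma is_walk_rev:
  assumes sym: "\<And>u v. E u v \<Longrightarrow> E v u"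
  shows "is_walk V E xs \<Longrightarrow> is_walk V E (rev xs)"
proof (induction xs rule: induct_list012)
  case (3 x y zs)
  have a: "is_walk V E (rev (y # zs))" using 3 by simp
  have "y \<in> V" using 3(3) is_walk_hd_in[of V E "y # zs"] by simp
  then have b: "is_walk V E [y, x]" using 3 sym by simp
  have "is_walk V E (rev (y # zs) @ tl [y, x])"
    by (rule is_walk_append[OF a b]) simp
  then show ?case by simp
qed auto

lemma wb_single[simp]: "wb V E [x] u v \<longleftrightarrow> x \<in> V \<and> u = x \<and> v = x"
  by (auto simp: wb_def)

lemma is_walk_nonempty: "is_walk V E xs \<Longrightarrow> xs \<noteq> []"
  by (auto simp: is_walk_def)

lemma wb_append: "wb V E xs u v \<Longrightarrow> wb V E ys v w \<Longrightarrow> wb V E (xs @ tl ys) u w"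
proof -
  assume a: "wb V E xs u v" "wb V E ys v w"
  then have ne: "xs \<noteq> []" "ys \<noteq> []" by (auto simp: wb_def dest: is_walk_nonempty)
  have "is_walk V E (xs @ tl ys)" using a by (auto simp: wb_def intro: is_walk_append)
  moreover have "hd (xs @ tl ys) = u" using a ne by (auto simp: wb_def)
  moreover have "last (xs @ tl ys) = w"
  proof (cases "tl ys = []")
    case True
    then have "ys = [hd ys]" using ne by (cases ys) auto
    then show ?thesis using a True by (auto simp: wb_def)
  next
    case False
    then have "last (tl ys) = last ys" by (cases ys) auto
    then show ?thesis using a False by (auto simp: wb_def)
  qed
  ultimately show ?thesis by (simp add: wb_def)
qed

lemma length_append_tl: "ys \<noteq> [] \<Longrightarrow> length (xs @ tl ys) = length xs + length ys - 1"
  by (cases ys) auto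

lemma wb_rev: "(\<And>u v. E u v \<Longrightarrow> E v u) \<Longrightarrow> wb V E xs u v \<Longrightarrow> wb V E (rev xs) v u"
  unfolding wb_def by (auto simp: is_walk_rev hd_rev last_rev)

lemma wb_nonempty: "wb V E xs u v \<Longrightarrow> xs \<noteq> []"
  by (auto simp: wb_def)

lemma wb_take: "wb V E xs u v \<Longrightarrow> i < length xs \<Longrightarrow> wb V E (take (Suc i) xs) u (xs ! i)"
proof -
  assume a: "wb V E xs u v" "i < length xs"
  have t: "take (Suc i) xs = take i xs @ [xs ! i]" using a(2) by (simp add: take_Suc_conv_app_nth)
  have "is_walk V E (take (Suc i) xs)" using a by (auto simp: wb_def is_walk_take)
  moreover have "hd (take (Suc i) xs) = u" using a by (auto simp: wb_def hd_take)
  ultimately show ?thesis using t by (simp add: wb_def)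
qed

lemma wb_drop: "wb V E xs u v \<Longrightarrow> i < length xs \<Longrightarrow> wb V E (drop i xs) (xs ! i) v"
  unfolding wb_def by (auto simp: is_walk_drop hd_drop_conv_nth)

lemma wb_in: "wb V E xs u v \<Longrightarrow> u \<in> V \<and> v \<in> V"
  unfolding wb_def by (metis is_walk_set last_in_set hd_in_set is_walk_Nil subsetD)

lemma wb_loop_erase:
  "wb V E xs u v \<Longrightarrow> \<exists>ys. wb V E ys u v \<and> distinct ys \<and> set ys \<subseteq> set xs \<and> length ys \<le> length xs"
proof (induction "length xs" arbitrary: xs rule: less_induct)
  case less
  show ?case
  proof (cases "distinct xs")
    case True then show ?thesis using less.prems by blast
  next
    case False
    then obtain as y bs cs where xs: "xs = as @ [y] @ bs @ [y] @ cs"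
      using not_distinct_decomp by blast
    have w: "is_walk V E xs" using less.prems by (simp add: wb_def)
    have w1: "is_walk V E (as @ [y])" using w xs is_walk_appendD1[of V E "as @ [y]"] by simp
    have w2: "is_walk V E ([y] @ cs)" using w xs is_walk_appendD2[of V E "as @ [y] @ bs" "[y] @ cs"] by simp
    have w3: "is_walk V E (as @ [y] @ cs)" using is_walk_append[OF w1 w2] by simp
    have "wb V E (as @ [y] @ cs) u v" using less.prems xs w3 unfolding wb_def
      by (cases as; cases cs) auto
    moreover have "length (as @ [y] @ cs) < length xs" using xs by simp
    ultimately obtain ys where "wb V E ys u v \<and> distinct ys \<and> set ys \<subseteq> set (as @ [y] @ cs) \<and> length ys \<le> length (as @ [y] @ cs)"
      using less.hyps by blast
    then show ?thesis using xs by auto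
  qed
qed

lemma wb_shorten_nondistinct:
  "wb V E xs u v \<Longrightarrow> \<not> distinct xs \<Longrightarrow> \<exists>ys. wb V E ys u v \<and> length ys < length xs"
proof -
  assume a: "wb V E xs u v" "\<not> distinct xs"
  then obtain as y bs cs where xs: "xs = as @ [y] @ bs @ [y] @ cs"
    using not_distinct_decomp by blast
  have w: "is_walk V E xs" using a by (simp add: wb_def)
  have w1: "is_walk V E (as @ [y])" using w xs is_walk_appendD1[of V E "as @ [y]"] by simp
  have w2: "is_walk V E ([y] @ cs)" using w xs is_walk_appendD2[of V E "as @ [y] @ bs" "[y] @ cs"] by simp
  have w3: "is_walk V E (as @ [y] @ cs)" using is_walk_append[OF w1 w2] by simp
  have "wb V E (as @ [y] @ cs) u v" using a xs w3 unfolding wb_def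
    by (cases as; cases cs) auto
  then show ?thesis using xs by (intro exI[of _ "as @ [y] @ cs"]) simp
qed

lemma wb_Cons: "wb W R xs y v \<Longrightarrow> R x y \<Longrightarrow> x \<in> W \<Longrightarrow> wb W R (x # xs) x v"
  by (cases xs) (auto simp: wb_def)

lemma wb_map_upt:
  assumes "\<And>t. a \<le> t \<Longrightarrow> t < b \<Longrightarrow> E (h t) (h (Suc t))" "\<And>t. a \<le> t \<Longrightarrow> t \<le> b \<Longrightarrow> h t \<in> V" "a \<le> b"
  shows "wb V E (map h [a..<Suc b]) (h a) (h b)"
  using assms
proof (induction b)
  case 0 then show ?case by simp
next
  case (Suc b)
  show ?case
  proof (cases "a = Suc b")
    case True then show ?thesis using Suc by simp
  next
    case False
    then have ab: "a \<le> b" using Suc by simp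
    have w1: "wb V E (map h [a..<Suc b]) (h a) (h b)" using Suc ab by simp
    have e: "E (h b) (h (Suc b))" using Suc ab by simp
    have "h b \<in> V" "h (Suc b) \<in> V" using Suc.prems(2) ab by auto
    then have w2: "wb V E [h b, h (Suc b)] (h b) (h (Suc b))"
      using e by (simp add: wb_def)
    have "wb V E (map h [a..<Suc b] @ tl [h b, h (Suc b)]) (h a) (h (Suc b))"
      by (rule wb_append[OF w1 w2])
    then show ?thesis using ab by simp
  qed
qed

locale cgraph =
  fixes V :: "'v set" and E :: "'v \<Rightarrow> 'v \<Rightarrow> bool"
  assumes sym: "E u v \<Longrightarrow> E v u"
    and edge_in: "E u v \<Longrightarrow> u \<in> V"
    and conn: "u \<in> V \<Longrightarrow> v \<in> V \<Longrightarrow> \<exists>xs. wb V E xs u v"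
begin

abbreviation "gd \<equiv> graph_dist V E"

lemma gd_le: "wb V E xs u v \<Longrightarrow> gd u v \<le> length xs - 1"
proof -
  assume w: "wb V E xs u v"
  have "xs \<noteq> []" using w by (rule wb_nonempty)
  then have "length xs = Suc (length xs - 1)" by simp
  then have "\<exists>ys. is_walk V E ys \<and> hd ys = u \<and> last ys = v \<and> length ys = Suc (length xs - 1)"
    using w by (intro exI[of _ xs]) (simp add: wb_def)
  then show ?thesis unfolding graph_dist_def by (rule Least_le)
qed

lemma gd_ex: assumes "u \<in> V" "v \<in> V" shows "\<exists>xs. wb V E xs u v \<and> length xs = Suc (gd u v)"
proof -
  obtain xs where xs: "wb V E xs u v" using conn assms by blast
  have "xs \<noteq> []" using xs by (rule wb_nonempty)
  then have "length xs = Suc (length xs - 1)" by simp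
  then have "is_walk V E xs \<and> hd xs = u \<and> last xs = v \<and> length xs = Suc (length xs - 1)"
    using xs unfolding wb_def by blast
  then have "\<exists>n xs. is_walk V E xs \<and> hd xs = u \<and> last xs = v \<and> length xs = Suc n"
    by blast
  from LeastI_ex[OF this] show ?thesis unfolding graph_dist_def wb_def by blast
qed

lemma gd_refl[simp]: "u \<in> V \<Longrightarrow> gd u u = 0"
  using gd_le[of "[u]" u u] by simp

lemma gd_zero: "u \<in> V \<Longrightarrow> v \<in> V \<Longrightarrow> gd u v = 0 \<Longrightarrow> u = v"
  using gd_ex[of u v] by (auto simp: wb_def length_Suc_conv)

lemma gd_sym: "u \<in> V \<Longrightarrow> v \<in> V \<Longrightarrow> gd u v = gd v u"
proof -
  have *: "gd a b \<le> gd b a" if ab: "a \<in> V" "b \<in> V" for a b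
  proof -
    obtain xs where "wb V E xs b a" "length xs = Suc (gd b a)" using gd_ex[OF ab(2) ab(1)] by blast
    then show ?thesis using gd_le[OF wb_rev[OF sym]] by fastforce
  qed
  assume "u \<in> V" "v \<in> V" then show ?thesis using *[of u v] *[of v u] by simp
qed

lemma gd_tri: "u \<in> V \<Longrightarrow> v \<in> V \<Longrightarrow> w \<in> V \<Longrightarrow> gd u w \<le> gd u v + gd v w"
proof -
  assume a: "u \<in> V" "v \<in> V" "w \<in> V"
  obtain xs where xs: "wb V E xs u v" "length xs = Suc (gd u v)" using gd_ex a by blast
  obtain ys where ys: "wb V E ys v w" "length ys = Suc (gd v w)" using gd_ex a by blast
  have "wb V E (xs @ tl ys) u w" by (rule wb_append[OF xs(1) ys(1)])
  from gd_le[OF this] show ?thesis using xs ys by simp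
qed

lemma edge_in2: "E u v \<Longrightarrow> u \<in> V \<and> v \<in> V"
  using edge_in sym by blast

lemma wb_edge: "E u v \<Longrightarrow> wb V E [u, v] u v"
  using edge_in2[of u v] by (simp add: wb_def)

lemma gd_edge: "E u v \<Longrightarrow> gd u v \<le> 1"
  using gd_le[OF wb_edge] by simp

lemma gd_shortest_distinct: "wb V E xs u v \<Longrightarrow> length xs = Suc (gd u v) \<Longrightarrow> distinct xs"
proof (rule ccontr)
  assume a: "wb V E xs u v" "length xs = Suc (gd u v)" "\<not> distinct xs"
  then obtain ys where ys: "wb V E ys u v" "length ys < length xs" using wb_shorten_nondistinct[OF a(1) a(3)] by blast
  have "gd u v \<le> length ys - 1" using gd_le[OF ys(1)] .
  moreover have "ys \<noteq> []" using ys(1) by (rule wb_nonempty)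
  ultimately show False using ys(2) a(2) by (cases ys) auto
qed

lemma gd_geod:
  assumes xs: "wb V E xs u v" "length xs = Suc (gd u v)" and ij: "i \<le> j" "j < length xs"
  shows "gd (xs ! i) (xs ! j) = j - i"
proof -
  have inV: "set xs \<subseteq> V" using xs(1) unfolding wb_def by (auto dest: is_walk_set)
  have uv: "u \<in> V" "v \<in> V" using wb_in[OF xs(1)] by auto
  have xi: "xs ! i \<in> V" "xs ! j \<in> V" using inV ij by auto
  have w1: "wb V E (take (Suc i) xs) u (xs ! i)" using wb_take[OF xs(1)] ij by simp
  have w2: "wb V E (drop i (take (Suc j) xs)) (xs ! i) (xs ! j)"
    using wb_drop[OF wb_take[OF xs(1), of j]] ij by simp
  have w3: "wb V E (drop j xs) (xs ! j) v" using wb_drop[OF xs(1)] ij by simp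
  have d1: "gd u (xs ! i) \<le> i" using gd_le[OF w1] ij by simp
  have d2: "gd (xs ! i) (xs ! j) \<le> j - i" using gd_le[OF w2] ij by simp
  have d3: "gd (xs ! j) v \<le> length xs - 1 - j" using gd_le[OF w3] ij by simp
  have "gd u v \<le> gd u (xs ! i) + gd (xs ! i) (xs ! j) + gd (xs ! j) v"
    using gd_tri[OF uv(1) xi(1) uv(2)] gd_tri[OF xi(1) xi(2) uv(2)] by simp
  then show ?thesis using d1 d2 d3 xs(2) ij by linarith
qed

lemma gd_geod0:
  assumes xs: "wb V E xs u v" "length xs = Suc (gd u v)" and i: "i < length xs"
  shows "gd u (xs ! i) = i" "gd (xs ! i) v = gd u v - i"
proof -
  have h: "hd xs = xs ! 0" "last xs = xs ! (length xs - 1)" using wb_nonempty[OF xs(1)]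
    by (auto simp: hd_conv_nth last_conv_nth)
  have u: "u = xs ! 0" and v: "v = xs ! (length xs - 1)" using xs(1) h by (auto simp: wb_def)
  have "gd (xs ! 0) (xs ! i) = i - 0" using gd_geod[OF xs, of 0 i] i by simp
  then show "gd u (xs ! i) = i" using u by simp
  have "gd (xs ! i) (xs ! (length xs - 1)) = (length xs - 1) - i" using gd_geod[OF xs, of i "length xs - 1"] i by simp
  then have "gd (xs ! i) v = (length xs - 1) - i" using v by simp
  moreover have "gd u v = length xs - 1" using xs(2) by simp
  ultimately show "gd (xs ! i) v = gd u v - i" by simp
qed

end




context cgraph begin

definition btw where "btw a p c \<longleftrightarrow> p \<in> V \<and> gd a p + gd p c = gd a c"

lemma on_geod_btw:
  assumes "wb V E xs a b" "length xs = Suc (gd a b)" "p \<in> set xs"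
  shows "btw a p b"
proof -
  obtain i where i: "i < length xs" "p = xs ! i" using assms(3) by (metis in_set_conv_nth)
  have "p \<in> V" using assms(1) assms(3) unfolding wb_def by (auto dest: is_walk_set)
  moreover have "gd a p = i" "gd p b = gd a b - i" using gd_geod0[OF assms(1,2) i(1)] i(2) by auto
  ultimately show ?thesis using i assms(2) by (simp add: btw_def)
qed

end

lemma tree_cgraph: "is_tree V E \<Longrightarrow> cgraph V E"
  unfolding is_tree_def cgraph_def wb_def by metis

lemma tree_unique:
  assumes "is_tree V E" "wb V E xs u v" "distinct xs" "wb V E ys u v" "distinct ys"
  shows "xs = ys"
proof -
  have "u \<in> V" "v \<in> V" using wb_in[OF assms(2)] by auto
  then have "\<exists>!xs. is_walk V E xs \<and> distinct xs \<and> hd xs = u \<and> last xs = v"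
    using assms(1) unfolding is_tree_def by blast
  then show ?thesis using assms(2-5) unfolding wb_def by blast
qed

locale tree = cgraph +
  assumes tree: "is_tree V E"
begin

lemma btw_on_walk:
  assumes b: "btw a p c" and W: "wb V E W a c"
  shows "p \<in> set W"
proof -
  have ac: "a \<in> V" "c \<in> V" using wb_in[OF W] by auto
  have p: "p \<in> V" using b by (simp add: btw_def)
  obtain P1 where P1: "wb V E P1 a p" "length P1 = Suc (gd a p)" using gd_ex ac p by blast
  obtain P2 where P2: "wb V E P2 p c" "length P2 = Suc (gd p c)" using gd_ex ac p by blast
  have P: "wb V E (P1 @ tl P2) a c" by (rule wb_append[OF P1(1) P2(1)])
  have lP: "length (P1 @ tl P2) = Suc (gd a c)" using P1 P2 b by (simp add: btw_def)
  have dP: "distinct (P1 @ tl P2)" by (rule gd_shortest_distinct[OF P lP])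
  obtain ys where ys: "wb V E ys a c" "distinct ys" "set ys \<subseteq> set W"
    using wb_loop_erase[OF W] by blast
  have "ys = P1 @ tl P2" using tree_unique[OF tree ys(1,2) P dP] .
  moreover have "p \<in> set P1" using P1(1) unfolding wb_def by (metis last_in_set is_walk_nonempty)
  ultimately show ?thesis using ys(3) by auto
qed

lemma btw_split:
  assumes b: "btw a p c" and bV: "b \<in> V" and aV: "a \<in> V" and cV: "c \<in> V"
  shows "btw a p b \<or> btw b p c"
proof -
  obtain W1 where W1: "wb V E W1 a b" "length W1 = Suc (gd a b)" using gd_ex aV bV by blast
  obtain W2 where W2: "wb V E W2 b c" "length W2 = Suc (gd b c)" using gd_ex cV bV by blast
  have "p \<in> set (W1 @ tl W2)" by (rule btw_on_walk[OF b wb_append[OF W1(1) W2(1)]])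
  then have "p \<in> set W1 \<or> p \<in> set W2" using wb_nonempty[OF W2(1)] by (cases W2) auto
  then show ?thesis using on_geod_btw W1 W2 by blast
qed

lemma btw_chain:
  assumes "\<forall>i\<le>K. z i \<in> V" "\<forall>i<K. gd (z i) (z (Suc i)) \<le> J" "btw (z 0) p (z K)"
  shows "\<exists>i\<le>K. gd (z i) p \<le> J"
  using assms
proof (induction K)
  case 0 then show ?case by (simp add: btw_def)
next
  case (Suc K)
  have "btw (z 0) p (z K) \<or> btw (z K) p (z (Suc K))"
    using btw_split[OF Suc.prems(3)] Suc.prems(1) by auto
  then show ?case
  proof
    assume "btw (z 0) p (z K)"
    then show ?thesis using Suc by (metis le_SucI less_SucI)
  next
    assume "btw (z K) p (z (Suc K))"
    then have "gd (z K) p \<le> gd (z K) (z (Suc K))" by (simp add: btw_def)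
    then show ?thesis using Suc.prems(2) by (intro exI[of _ K]) auto
  qed
qed

end




locale ptree =
  fixes V :: "'v set" and lev :: "'v \<Rightarrow> nat" and par :: "'v \<Rightarrow> 'v" and root :: 'v
  assumes root_in: "root \<in> V" and lev_root: "lev root = 0" and par_root: "par root = root"
    and lev0: "u \<in> V \<Longrightarrow> lev u = 0 \<Longrightarrow> u = root"
    and par_in: "u \<in> V \<Longrightarrow> par u \<in> V"
    and par_lev: "u \<in> V \<Longrightarrow> 0 < lev u \<Longrightarrow> Suc (lev (par u)) = lev u"
begin

definition PE where "PE u v \<longleftrightarrow> u \<in> V \<and> v \<in> V \<and> ((0 < lev u \<and> v = par u) \<or> (0 < lev v \<and> u = par v))"

abbreviation anc where "anc u k \<equiv> (par ^^ k) u"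

lemma anc_in: "u \<in> V \<Longrightarrow> anc u k \<in> V"
  by (induction k) (auto simp: par_in)

lemma anc_lev: "u \<in> V \<Longrightarrow> lev (anc u k) = lev u - k"
proof (induction k)
  case (Suc k)
  have a: "anc u k \<in> V" using anc_in Suc by blast
  show ?case
  proof (cases "lev (anc u k) = 0")
    case True
    then have "anc u k = root" using lev0 a by blast
    then show ?thesis using True Suc lev_root par_root by simp
  next
    case False
    then show ?thesis using par_lev[OF a] Suc by simp
  qed
qed simp

lemma anc_Suc: "anc u (Suc k) = anc (par u) k"
  by (simp add: funpow_Suc_right del: funpow.simps)

lemma anc_top: "u \<in> V \<Longrightarrow> anc u (lev u) = root"
  using anc_lev[of u "lev u"] anc_in[of u "lev u"] lev0 by simp

lemma PE_sym: "PE u v \<Longrightarrow> PE v u"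
  unfolding PE_def by blast


lemma walk_root: "u \<in> V \<Longrightarrow> \<exists>xs. wb V PE xs u root"
proof (induction "lev u" arbitrary: u)
  case 0 then show ?case using lev0 by (intro exI[of _ "[u]"]) simp
next
  case (Suc n)
  have p: "par u \<in> V" "lev (par u) = n" using par_in par_lev[of u] Suc by auto
  then obtain xs where "wb V PE xs (par u) root" using Suc by blast
  moreover have "PE u (par u)" using Suc p by (simp add: PE_def)
  ultimately show ?case using Suc by (blast intro: wb_Cons)
qed

lemma cg: "cgraph V PE"
proof
  show "PE u v \<Longrightarrow> PE v u" for u v by (rule PE_sym)
  show "PE u v \<Longrightarrow> u \<in> V" for u v by (simp add: PE_def)
  fix u v assume uv: "u \<in> V" "v \<in> V"
  obtain xs where xs: "wb V PE xs u root" using walk_root uv by blast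
  obtain ys where ys: "wb V PE ys v root" using walk_root uv by blast
  have "wb V PE (rev ys) root v" using wb_rev[OF _ ys] PE_sym by blast
  then show "\<exists>xs. wb V PE xs u v" using wb_append[OF xs] by blast
qed

fun isdown where
  "isdown (x # y # zs) = (0 < lev y \<and> x = par y \<and> isdown (y # zs))"
| "isdown _ = True"

lemma down_stays:
  "is_walk V PE (x # y # zs) \<Longrightarrow> distinct (x # y # zs) \<Longrightarrow> 0 < lev y \<Longrightarrow> x = par y \<Longrightarrow> isdown (x # y # zs)"
proof (induction zs arbitrary: x y)
  case Nil then show ?case by simp
next
  case (Cons z zs)
  have "PE y z" using Cons.prems(1) by simp
  then have "0 < lev z \<and> y = par z" using Cons.prems unfolding PE_def by auto
  then have "isdown (y # z # zs)" using Cons.IH[of y z] Cons.prems by simp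
  then show ?case using Cons.prems by simp
qed

lemma down_anc:
  "isdown xs \<Longrightarrow> xs \<noteq> [] \<Longrightarrow> set xs \<subseteq> V \<Longrightarrow>
     hd xs = anc (last xs) (length xs - 1) \<and> lev (last xs) = lev (hd xs) + (length xs - 1)"
proof (induction xs rule: isdown.induct)
  case (1 x y zs)
  then have IH: "y = anc (last (y # zs)) (length zs) \<and> lev (last (y # zs)) = lev y + length zs" by simp
  have yV: "y \<in> V" using 1 by simp
  have "anc (last (y # zs)) (Suc (length zs)) = par (anc (last (y # zs)) (length zs))" by simp
  then have "x = anc (last (y # zs)) (Suc (length zs))" using IH 1 by simp
  moreover have "lev y = Suc (lev x)" using par_lev[OF yV] 1 by simp
  ultimately show ?case using IH by simp
qed auto

definition desc where "desc w u \<longleftrightarrow> (\<exists>k. anc w k = u)"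

lemma anc_lev_le: "w \<in> V \<Longrightarrow> lev (anc w k) \<le> lev w"
  using anc_lev by simp

lemma walk_enters:
  "is_walk V PE xs \<Longrightarrow> desc (last xs) u \<Longrightarrow> \<not> desc (hd xs) u \<Longrightarrow> u \<in> set xs"
proof (induction xs rule: induct_list012)
  case (2 x) then show ?case by simp
next
  case (3 x y zs)
  show ?case
  proof (cases "desc y u")
    case False
    then have "u \<in> set (y # zs)" using 3 by simp
    then show ?thesis by simp
  next
    case True
    then obtain k where k: "anc y k = u" by (auto simp: desc_def)
    have "PE x y" using 3 by simp
    then have "(0 < lev x \<and> y = par x) \<or> (0 < lev y \<and> x = par y)" by (simp add: PE_def)
    then show ?thesis
    proof (elim disjE conjE)
      assume 1: "0 < lev x" "y = par x"
      then have "anc x (Suc k) = u" using k anc_Suc[of k x] by simp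
      then have "desc x u" unfolding desc_def by blast
      then show ?thesis using "3.prems"(3) by simp
    next
      assume 2: "0 < lev y" "x = par y"
      show ?thesis
      proof (cases k)
        case 0 then show ?thesis using k by simp
      next
        case (Suc k')
        then have "anc x k' = u" using k anc_Suc[of k' y] 2 by simp
        then have "desc x u" unfolding desc_def by blast
        then show ?thesis using "3.prems"(3) by simp
      qed
    qed
  qed
qed simp

lemma not_desc_par: "u \<in> V \<Longrightarrow> 0 < lev u \<Longrightarrow> \<not> desc (par u) u"
proof
  assume a: "u \<in> V" "0 < lev u" "desc (par u) u"
  then obtain k where k: "anc (par u) k = u" by (auto simp: desc_def)
  have "lev (anc (par u) k) \<le> lev (par u)" using anc_lev_le par_in a by blast
  then show False using k par_lev[OF a(1,2)] by simp
qed

lemma distinct_walk_loop: "wb W R ys u u \<Longrightarrow> distinct ys \<Longrightarrow> ys = [u]"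
proof -
  assume a: "wb W R ys u u" "distinct ys"
  show ?thesis
  proof (cases ys)
    case Nil then show ?thesis using a by (simp add: wb_def)
  next
    case (Cons y ys')
    show ?thesis
    proof (cases ys')
      case Nil then show ?thesis using a Cons by (simp add: wb_def)
    next
      case (Cons z zs)
      then have "last ys \<in> set ys'" using \<open>ys = y # ys'\<close> by simp
      moreover have "hd ys = last ys" using a by (simp add: wb_def)
      ultimately show ?thesis using a(2) \<open>ys = y # ys'\<close> by simp
    qed
  qed
qed

lemma wb_tl2: "wb W R (x # y # zs) u v \<Longrightarrow> wb W R (y # zs) y v"
  by (simp add: wb_def)

lemma unique_walk:
  "wb V PE xs u v \<Longrightarrow> distinct xs \<Longrightarrow> wb V PE ys u v \<Longrightarrow> distinct ys \<Longrightarrow> xs = ys"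
proof (induction xs arbitrary: u ys)
  case Nil then show ?case by (simp add: wb_def)
next
  case (Cons x xs)
  have xu: "x = u" using Cons.prems by (simp add: wb_def)
  show ?case
  proof (cases xs)
    case Nil
    then have "u = v" using Cons.prems xu by (simp add: wb_def)
    then show ?thesis using distinct_walk_loop[of V PE ys u] Cons.prems xu Nil by simp
  next
    case (Cons x1 xs')
    note xs = this
    show ?thesis
    proof (cases ys)
      case Nil then show ?thesis using Cons.prems by (simp add: wb_def)
    next
      case (Cons y ys0)
      show ?thesis
      proof (cases ys0)
        case Nil
        then have "wb V PE [y] u v" using Cons.prems \<open>ys = y # ys0\<close> by simp
        then have "u = v" by simp
        then have "x # xs = [u]" using distinct_walk_loop[of V PE "x # xs" u] Cons.prems by simp
        then show ?thesis using xs by simp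
      next
        case (Cons y1 ys')
        have ys: "ys = u # y1 # ys'" using \<open>ys = y # ys0\<close> Cons Cons.prems by (simp add: wb_def)
        have wx: "wb V PE (u # x1 # xs') u v" using Cons.prems xs xu by simp
        have wy: "wb V PE (u # y1 # ys') u v" using Cons.prems ys by simp
        have dx: "distinct (u # x1 # xs')" using Cons.prems xs xu by simp
        have dy: "distinct (u # y1 # ys')" using Cons.prems ys by simp
        have uV: "u \<in> V" using wb_in[OF wx] by simp
        have sx: "set (u # x1 # xs') \<subseteq> V" using wx unfolding wb_def by (blast dest: is_walk_set)
        have sy: "set (u # y1 # ys') \<subseteq> V" using wy unfolding wb_def by (blast dest: is_walk_set)
        have lx: "last (x1 # xs') = v" using wx by (simp add: wb_def)
        have ly: "last (y1 # ys') = v" using wy by (simp add: wb_def)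
        have ex: "(0 < lev u \<and> x1 = par u) \<or> (0 < lev x1 \<and> u = par x1)"
          using wx by (simp add: wb_def PE_def)
        have ey: "(0 < lev u \<and> y1 = par u) \<or> (0 < lev y1 \<and> u = par y1)"
          using wy by (simp add: wb_def PE_def)
        have descv: "desc v u" if d: "isdown (u # z1 # zs)" "set (u # z1 # zs) \<subseteq> V" "last (z1 # zs) = v" for z1 zs
        proof -
          have "hd (u # z1 # zs) = anc (last (u # z1 # zs)) (length (u # z1 # zs) - 1)"
            using down_anc[OF d(1) _ d(2)] by blast
          then have "u = anc v (Suc (length zs))" using d(3) by simp
          then show ?thesis unfolding desc_def by (intro exI[of _ "Suc (length zs)"]) simp
        qed
        have x1y1: "x1 = y1"
        proof -
          { assume a: "0 < lev u" "x1 = par u" "0 < lev y1" "u = par y1"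
            have "isdown (u # y1 # ys')" using down_stays wy dy a by (simp add: wb_def)
            then have "desc v u" using descv sy ly by blast
            moreover have "\<not> desc (hd (x1 # xs')) u" using not_desc_par[OF uV a(1)] a by simp
            ultimately have "u \<in> set (x1 # xs')" using walk_enters[of "x1 # xs'" u] wb_tl2[OF wx] lx
              by (simp add: wb_def)
            then have False using dx by simp }
          moreover
          { assume a: "0 < lev u" "y1 = par u" "0 < lev x1" "u = par x1"
            have "isdown (u # x1 # xs')" using down_stays wx dx a by (simp add: wb_def)
            then have "desc v u" using descv sx lx by blast
            moreover have "\<not> desc (hd (y1 # ys')) u" using not_desc_par[OF uV a(1)] a by simp
            ultimately have "u \<in> set (y1 # ys')" using walk_enters[of "y1 # ys'" u] wb_tl2[OF wy] ly
              by (simp add: wb_def)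
            then have False using dy by simp }
          moreover
          { assume a: "0 < lev x1" "u = par x1" "0 < lev y1" "u = par y1"
            have "isdown (u # x1 # xs')" using down_stays wx dx a by (simp add: wb_def)
            then have "isdown (x1 # xs')" by simp
            then have hx: "x1 = anc v (length xs') \<and> lev v = lev x1 + length xs'"
              using down_anc[of "x1 # xs'"] sx lx by simp
            have "isdown (u # y1 # ys')" using down_stays wy dy a by (simp add: wb_def)
            then have "isdown (y1 # ys')" by simp
            then have hy: "y1 = anc v (length ys') \<and> lev v = lev y1 + length ys'"
              using down_anc[of "y1 # ys'"] sy ly by simp
            have "lev x1 = lev y1" using par_lev[of x1] par_lev[of y1] a sx sy by auto
            then have "length xs' = length ys'" using hx hy by linarith
            then have "x1 = y1" using hx hy by metis }
          ultimately show ?thesis using ex ey by metis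
        qed
        have "x1 # xs' = y1 # ys'"
          using Cons.IH[of x1 "y1 # ys'"] wb_tl2[OF wx] wb_tl2[OF wy] dx dy x1y1 xs by simp
        then show ?thesis using xs ys xu by simp
      qed
    qed
  qed
qed

lemma is_tree: "is_tree V PE"
  unfolding is_tree_def
proof (intro conjI allI impI ballI)
  show "V \<noteq> {}" using root_in by blast
  fix u v
  assume e: "PE u v"
  then show "u \<in> V" "v \<in> V" "PE v u" by (auto simp: PE_def)
  show "u \<noteq> v"
  proof
    assume "u = v"
    then show False using e par_lev[of u] unfolding PE_def by auto
  qed
next
  fix u v assume uv: "u \<in> V" "v \<in> V"
  interpret cgraph V PE by (rule cg)
  obtain xs where "wb V PE xs u v" using conn uv by blast
  then obtain ys where ys: "wb V PE ys u v" "distinct ys" using wb_loop_erase[of V PE xs u v] by auto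
  show "\<exists>!xs. is_walk V PE xs \<and> distinct xs \<and> hd xs = u \<and> last xs = v"
  proof (rule ex1I[of _ ys])
    show "is_walk V PE ys \<and> distinct ys \<and> hd ys = u \<and> last ys = v" using ys by (simp add: wb_def)
    fix zs assume "is_walk V PE zs \<and> distinct zs \<and> hd zs = u \<and> last zs = v"
    then show "zs = ys" using unique_walk[of zs u v ys] ys by (simp add: wb_def)
  qed
qed

end



lemma word_prod_Nil[simp]: "word_prod G [] = \<one>\<^bsub>G\<^esub>"
  by (simp add: word_prod_def)

lemma word_prod_Cons[simp]: "word_prod G (x # xs) = x \<otimes>\<^bsub>G\<^esub> word_prod G xs"
  by (simp add: word_prod_def)

locale cay = group G for G :: "('g, 'b) monoid_scheme" (structure) +
  fixes S :: "'g set"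
  assumes finS: "finite S" and S_sub: "S \<subseteq> carrier G" and gen: "generate G S = carrier G"
begin

abbreviation "SG \<equiv> sym_gens G S"

lemma SG_sub: "SG \<subseteq> carrier G"
  using S_sub by (auto simp: sym_gens_def)

lemma SG_inv: "s \<in> SG \<Longrightarrow> inv s \<in> SG"
  using S_sub by (auto simp: sym_gens_def)

lemma SG_ne: "s \<in> SG \<Longrightarrow> s \<noteq> \<one>"
  by (auto simp: sym_gens_def)

lemma finite_SG: "finite SG"
  using finS by (simp add: sym_gens_def)

lemma wp_closed: "set ws \<subseteq> carrier G \<Longrightarrow> word_prod G ws \<in> carrier G"
  by (induction ws) auto

lemma wp_append: "set xs \<subseteq> carrier G \<Longrightarrow> set ys \<subseteq> carrier G \<Longrightarrow>
    word_prod G (xs @ ys) = word_prod G xs \<otimes> word_prod G ys"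
  by (induction xs) (auto simp: wp_closed m_assoc)

lemma gen_words: "g \<in> carrier G \<Longrightarrow> \<exists>ws. set ws \<subseteq> SG \<and> word_prod G ws = g"
proof -
  assume "g \<in> carrier G"
  then have "g \<in> generate G S" using gen by simp
  then show ?thesis
  proof (induction rule: generate.induct)
    case one then show ?case by (intro exI[of _ "[]"]) simp
  next
    case (incl h)
    show ?case
    proof (cases "h = \<one>")
      case True then show ?thesis by (intro exI[of _ "[]"]) simp
    next
      case False then show ?thesis using incl S_sub by (intro exI[of _ "[h]"]) (auto simp: sym_gens_def)
    qed
  next
    case (inv h)
    show ?case
    proof (cases "inv h = \<one>")
      case True then show ?thesis by (intro exI[of _ "[]"]) simp
    next
      case False then show ?thesis using inv S_sub by (intro exI[of _ "[inv h]"]) (auto simp: sym_gens_def)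
    qed
  next
    case (eng h1 h2)
    then obtain w1 w2 where "set w1 \<subseteq> SG" "word_prod G w1 = h1" "set w2 \<subseteq> SG" "word_prod G w2 = h2" by blast
    then show ?case using SG_sub by (intro exI[of _ "w1 @ w2"]) (auto simp: wp_append)
  qed
qed

definition adj where "adj x y \<longleftrightarrow> x \<in> carrier G \<and> (\<exists>s\<in>SG. y = x \<otimes> s)"

lemma adj_in: "adj x y \<Longrightarrow> x \<in> carrier G \<and> y \<in> carrier G"
  using SG_sub by (auto simp: adj_def)

lemma adj_sym: "adj x y \<Longrightarrow> adj y x"
proof -
  assume "adj x y"
  then obtain s where s: "x \<in> carrier G" "s \<in> SG" "y = x \<otimes> s" by (auto simp: adj_def)
  have sc: "s \<in> carrier G" using s SG_sub by auto
  have "y \<otimes> inv s = x" using s sc by (simp add: m_assoc)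
  then show "adj y x" using s sc SG_inv unfolding adj_def by (metis m_closed)
qed

fun pth where
  "pth g [] = [g]"
| "pth g (s # ws) = g # pth (g \<otimes> s) ws"

lemma pth_wb: "g \<in> carrier G \<Longrightarrow> set ws \<subseteq> SG \<Longrightarrow> wb (carrier G) adj (pth g ws) g (g \<otimes> word_prod G ws)"
proof (induction ws arbitrary: g)
  case Nil then show ?case by simp
next
  case (Cons s ws)
  have sc: "s \<in> carrier G" "set ws \<subseteq> carrier G" using Cons SG_sub by auto
  have "wb (carrier G) adj (pth (g \<otimes> s) ws) (g \<otimes> s) (g \<otimes> s \<otimes> word_prod G ws)"
    using Cons sc by simp
  moreover have "adj g (g \<otimes> s)" using Cons by (auto simp: adj_def)
  ultimately show ?case using Cons sc wb_Cons[of "carrier G" adj] by (simp add: m_assoc wp_closed)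
qed

lemma pth_length: "length (pth g ws) = Suc (length ws)"
  by (induction ws arbitrary: g) auto

lemma pth_nth: "g \<in> carrier G \<Longrightarrow> set ws \<subseteq> carrier G \<Longrightarrow> t \<le> length ws \<Longrightarrow>
    pth g ws ! t = g \<otimes> word_prod G (take t ws)"
proof (induction ws arbitrary: g t)
  case Nil then show ?case by simp
next
  case (Cons s ws)
  show ?case
  proof (cases t)
    case 0 then show ?thesis using Cons by simp
  next
    case (Suc t')
    then show ?thesis using Cons by (simp add: m_assoc wp_closed set_take_subset[THEN subset_trans])
  qed
qed

lemma walk_word: "wb (carrier G) adj xs g h \<Longrightarrow>
   \<exists>ws. length ws = length xs - 1 \<and> set ws \<subseteq> SG \<and> g \<otimes> word_prod G ws = h"
proof (induction xs arbitrary: g rule: induct_list012)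
  case 1 then show ?case by (simp add: wb_def)
next
  case (2 x) then show ?case by (intro exI[of _ "[]"]) simp
next
  case (3 x y zs)
  have a: "adj x y" "x = g" using "3.prems" by (auto simp: wb_def)
  then obtain s where s: "s \<in> SG" "y = g \<otimes> s" by (auto simp: adj_def)
  have "wb (carrier G) adj (y # zs) y h" using "3.prems" by (simp add: wb_def)
  then obtain ws where ws: "length ws = length zs" "set ws \<subseteq> SG" "y \<otimes> word_prod G ws = h"
    using "3.IH"(2) by fastforce
  have gc: "g \<in> carrier G" using a adj_in by blast
  have wc: "word_prod G ws \<in> carrier G" "s \<in> carrier G" using ws s SG_sub wp_closed by auto
  have "g \<otimes> word_prod G (s # ws) = h" using ws s gc wc by (simp add: m_assoc)
  then show ?case using ws s by (intro exI[of _ "s # ws"]) auto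
qed

lemma conn_cay: "g \<in> carrier G \<Longrightarrow> h \<in> carrier G \<Longrightarrow> \<exists>xs. wb (carrier G) adj xs g h"
proof -
  assume gh: "g \<in> carrier G" "h \<in> carrier G"
  obtain ws where ws: "set ws \<subseteq> SG" "word_prod G ws = inv g \<otimes> h" using gen_words gh by blast
  have "g \<otimes> (inv g \<otimes> h) = h" using gh by (simp add: m_assoc[symmetric])
  then show ?thesis using pth_wb[OF gh(1) ws(1)] ws(2) by auto
qed

sublocale X: cgraph "carrier G" adj
  by unfold_locales (auto intro: adj_sym conn_cay dest: adj_in)

abbreviation "dX \<equiv> graph_dist (carrier G) adj"

lemma cdist_eq: "g \<in> carrier G \<Longrightarrow> cayley_dist G S g h = dX g h"
proof -
  assume g: "g \<in> carrier G"
  have "(\<exists>ws. length ws = n \<and> set ws \<subseteq> SG \<and> g \<otimes> word_prod G ws = h) \<longleftrightarrow>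
        (\<exists>xs. is_walk (carrier G) adj xs \<and> hd xs = g \<and> last xs = h \<and> length xs = Suc n)" for n
  proof
    assume "\<exists>ws. length ws = n \<and> set ws \<subseteq> SG \<and> g \<otimes> word_prod G ws = h"
    then obtain ws where "length ws = n" "set ws \<subseteq> SG" "g \<otimes> word_prod G ws = h" by blast
    then show "\<exists>xs. is_walk (carrier G) adj xs \<and> hd xs = g \<and> last xs = h \<and> length xs = Suc n"
      using pth_wb[OF g, of ws] pth_length[of g ws] unfolding wb_def by metis
  next
    assume "\<exists>xs. is_walk (carrier G) adj xs \<and> hd xs = g \<and> last xs = h \<and> length xs = Suc n"
    then obtain xs where "wb (carrier G) adj xs g h" "length xs = Suc n" unfolding wb_def by blast
    then show "\<exists>ws. length ws = n \<and> set ws \<subseteq> SG \<and> g \<otimes> word_prod G ws = h"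
      using walk_word by fastforce
  qed
  then show ?thesis unfolding cayley_dist_def graph_dist_def by simp
qed

lemma dX_word: "g \<in> carrier G \<Longrightarrow> set ts \<subseteq> SG \<Longrightarrow> g \<otimes> word_prod G ts = h \<Longrightarrow> dX g h \<le> length ts"
  using X.gd_le[OF pth_wb] pth_length by (metis diff_Suc_1)

lemma dX_word_ex: "g \<in> carrier G \<Longrightarrow> h \<in> carrier G \<Longrightarrow>
    \<exists>ts. set ts \<subseteq> SG \<and> length ts = dX g h \<and> g \<otimes> word_prod G ts = h"
proof -
  assume gh: "g \<in> carrier G" "h \<in> carrier G"
  obtain xs where "wb (carrier G) adj xs g h" "length xs = Suc (dX g h)" using X.gd_ex gh by blast
  then show ?thesis using walk_word by fastforce
qed

lemma countable_G: "countable (carrier G)"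
proof -
  have "carrier G \<subseteq> word_prod G ` lists SG" using gen_words by fastforce
  moreover have "countable (word_prod G ` lists SG)"
    using finite_SG by (intro countable_image countable_lists countable_finite)
  ultimately show ?thesis by (rule countable_subset)
qed

end




context cay begin

definition gg :: "'g list \<Rightarrow> nat \<Rightarrow> 'g" where "gg ss t = word_prod G (take t ss)"

lemma gg_in: "set ss \<subseteq> SG \<Longrightarrow> gg ss t \<in> carrier G"
  unfolding gg_def using SG_sub by (meson order_trans set_take_subset wp_closed)

lemma gg_0: "gg ss 0 = \<one>"
  by (simp add: gg_def)

lemma gg_Suc: "set ss \<subseteq> SG \<Longrightarrow> t < length ss \<Longrightarrow> gg ss (Suc t) = gg ss t \<otimes> ss ! t"
proof -
  assume a: "set ss \<subseteq> SG" "t < length ss"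
  have st: "ss ! t \<in> carrier G" using a SG_sub nth_mem by blast
  have c: "set (take t ss) \<subseteq> carrier G" using a SG_sub by (meson order_trans set_take_subset)
  have "gg ss (Suc t) = word_prod G (take t ss @ [ss ! t])"
    using a by (simp add: gg_def take_Suc_conv_app_nth)
  also have "\<dots> = gg ss t \<otimes> ss ! t" using c st by (simp add: wp_append gg_def)
  finally show ?thesis .
qed

lemma gg_adj: "set ss \<subseteq> SG \<Longrightarrow> t < length ss \<Longrightarrow> adj (gg ss t) (gg ss (Suc t))"
  using gg_Suc gg_in nth_mem unfolding adj_def by blast

lemma gg_walk: "set ss \<subseteq> SG \<Longrightarrow> a \<le> b \<Longrightarrow> b \<le> length ss \<Longrightarrow>
    wb (carrier G) adj (map (gg ss) [a..<Suc b]) (gg ss a) (gg ss b)"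
  by (rule wb_map_upt) (auto intro: gg_adj gg_in)

lemma gg_dist: "set ss \<subseteq> SG \<Longrightarrow> a \<le> b \<Longrightarrow> b \<le> length ss \<Longrightarrow> dX (gg ss a) (gg ss b) \<le> b - a"
  using X.gd_le[OF gg_walk] by fastforce

lemma gg_subword: "set ss \<subseteq> SG \<Longrightarrow> 1 \<le> i \<Longrightarrow> i \<le> j \<Longrightarrow> j \<le> length ss \<Longrightarrow>
    word_prod G (subword ss i j) = inv (gg ss (i - 1)) \<otimes> gg ss j"
proof -
  assume a: "set ss \<subseteq> SG" "1 \<le> i" "i \<le> j" "j \<le> length ss"
  have j: "j = (i - 1) + (Suc j - i)" using a by simp
  have "take j ss = take (i - 1) ss @ subword ss i j"
    unfolding subword_def by (subst j) (simp only: take_add)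
  moreover have c1: "set (take (i - 1) ss) \<subseteq> carrier G" using a SG_sub by (meson order_trans set_take_subset)
  moreover have c2: "set (subword ss i j) \<subseteq> carrier G" unfolding subword_def
    using a SG_sub by (meson order_trans set_take_subset set_drop_subset)
  ultimately have "gg ss j = gg ss (i - 1) \<otimes> word_prod G (subword ss i j)"
    by (simp add: gg_def wp_append)
  then show ?thesis using wp_closed[OF c1] wp_closed[OF c2]
    by (simp add: gg_def m_assoc[symmetric])
qed

lemma chordal_intro:
  assumes H: "\<And>ss. simple_relation G S ss \<Longrightarrow> k \<le> length ss \<Longrightarrow>
     \<exists>i j. 1 \<le> i \<and> i \<le> i0 \<and> i < j \<and> j \<le> length ss \<and>
       dX (gg ss (i - 1)) (gg ss j) \<le> m \<and> dX (gg ss (i - 1)) (gg ss j) \<le> j - i \<and>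
       dX (gg ss (i - 1)) (gg ss j) + j + 2 \<le> length ss + i"
  shows "chordal G S i0 k m"
  unfolding chordal_def
proof (intro allI impI)
  fix ss assume a: "simple_relation G S ss \<and> k \<le> length ss"
  have ss: "set ss \<subseteq> SG" using a by (simp add: simple_relation_def)
  obtain i j where ij: "1 \<le> i" "i \<le> i0" "i < j" "j \<le> length ss"
    "dX (gg ss (i - 1)) (gg ss j) \<le> m" "dX (gg ss (i - 1)) (gg ss j) \<le> j - i"
    "dX (gg ss (i - 1)) (gg ss j) + j + 2 \<le> length ss + i" using H a by blast
  obtain ts where ts: "set ts \<subseteq> SG" "length ts = dX (gg ss (i - 1)) (gg ss j)"
     "gg ss (i - 1) \<otimes> word_prod G ts = gg ss j"
    using dX_word_ex[OF gg_in[OF ss] gg_in[OF ss]] by blast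
  have tc: "word_prod G ts \<in> carrier G" using ts SG_sub wp_closed by blast
  have "word_prod G ts = inv (gg ss (i - 1)) \<otimes> gg ss j"
    using ts(3) tc gg_in[OF ss] by (metis inv_closed l_inv l_one m_assoc)
  then have "word_prod G (subword ss i j) = word_prod G ts" using gg_subword[OF ss] ij by simp
  then show "\<exists>i j ts. 1 \<le> i \<and> i \<le> i0 \<and> i < j \<and> j \<le> length ss \<and> set ts \<subseteq> SG \<and>
           word_prod G (subword ss i j) = word_prod G ts \<and>
           length ts \<le> m \<and> length ts \<le> j - i \<and> length ts + j + 2 \<le> length ss + i"
    using ij ts by (intro exI[of _ i] exI[of _ j] exI[of _ ts]) simp
qed

lemma chordal_dest:
  assumes "chordal G S i0 k m" "simple_relation G S ss" "k \<le> length ss"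
  shows "\<exists>i j. 1 \<le> i \<and> i \<le> i0 \<and> i < j \<and> j \<le> length ss \<and>
       dX (gg ss (i - 1)) (gg ss j) \<le> m \<and> dX (gg ss (i - 1)) (gg ss j) \<le> j - i \<and>
       dX (gg ss (i - 1)) (gg ss j) + j + 2 \<le> length ss + i"
proof -
  have ss: "set ss \<subseteq> SG" using assms by (simp add: simple_relation_def)
  obtain i j ts where ij: "1 \<le> i" "i \<le> i0" "i < j" "j \<le> length ss" "set ts \<subseteq> SG"
    "word_prod G (subword ss i j) = word_prod G ts"
    "length ts \<le> m" "length ts \<le> j - i" "length ts + j + 2 \<le> length ss + i"
    using assms unfolding chordal_def by blast
  have "word_prod G ts = inv (gg ss (i - 1)) \<otimes> gg ss j" using gg_subword[OF ss] ij by simp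
  then have "gg ss (i - 1) \<otimes> word_prod G ts = gg ss j"
    using gg_in[OF ss] by (simp add: m_assoc[symmetric])
  then have "dX (gg ss (i - 1)) (gg ss j) \<le> length ts" using dX_word[OF gg_in[OF ss] ij(5)] by metis
  then show ?thesis using ij by (intro exI[of _ i] exI[of _ j]) simp
qed

end




lemma tree_interp: "is_tree V E \<Longrightarrow> tree V E"
  using tree_cgraph by (auto simp: tree_def tree_axioms_def)

context tree begin

lemma btw_sym: "btw a p c \<Longrightarrow> a \<in> V \<Longrightarrow> c \<in> V \<Longrightarrow> btw c p a"
  unfolding btw_def using gd_sym by auto

end

context cay begin

lemma qi_imp_chordal:
  assumes "qi_to_tree G S"
  shows "\<exists>i0 k m. chordal G S i0 k m"
proof -
  obtain V :: "nat set" and E where tr: "is_tree V E" and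
    qi: "quasi_isometric (carrier G) (\<lambda>g h. real (cayley_dist G S g h)) V (\<lambda>u v. real (graph_dist V E u v))"
    using assms unfolding qi_to_tree_def by blast
  then obtain f L C where f: "f ` carrier G \<subseteq> V" and L: "L \<ge> 1" and C: "C \<ge> 0"
     and bnd: "\<forall>x\<in>carrier G. \<forall>y\<in>carrier G. real (cayley_dist G S x y) / L - C \<le> real (graph_dist V E (f x) (f y)) \<and>
                 real (graph_dist V E (f x) (f y)) \<le> L * real (cayley_dist G S x y) + C"
    unfolding quasi_isometric_def by blast
  interpret T: tree V E using tr by (rule tree_interp)
  let ?dT = "graph_dist V E"
  have fV: "x \<in> carrier G \<Longrightarrow> f x \<in> V" for x using f by blast
  have Q1: "real (?dT (f x) (f y)) \<le> L * real (dX x y) + C" if "x \<in> carrier G" "y \<in> carrier G" for x y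
    using bnd that cdist_eq by metis
  have Q2: "real (dX x y) \<le> L * (real (?dT (f x) (f y)) + C)" if xy: "x \<in> carrier G" "y \<in> carrier G" for x y
  proof -
    have "real (dX x y) / L \<le> real (?dT (f x) (f y)) + C" using bnd xy cdist_eq by fastforce
    then show ?thesis using L by (simp add: pos_divide_le_eq mult.commute)
  qed
  define J :: nat where "J = nat \<lceil>L + C\<rceil>"
  have Q3: "?dT (f x) (f y) \<le> J" if "x \<in> carrier G" "y \<in> carrier G" "dX x y \<le> 1" for x y
  proof -
    have "real (?dT (f x) (f y)) \<le> L * real (dX x y) + C" using Q1 that by blast
    also have "\<dots> \<le> L * 1 + C" using that L by (intro add_right_mono mult_left_mono) auto
    also have "\<dots> \<le> real J" unfolding J_def by linarith
    finally show ?thesis by simp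
  qed
  define K1 where "K1 = L * (2 * real J + 1 + C)"
  define D0 where "D0 = L * K1 + C + real J"
  define K2 where "K2 = L * (D0 + real J + C)"
  define \<Delta> :: nat where "\<Delta> = nat \<lceil>K2\<rceil>"
  define R where "R = \<Delta> + 2"
  have "chordal G S (R + 1) (4 * R + 1) (2 * R)"
  proof (rule chordal_intro)
    fix ss assume sr: "simple_relation G S ss" and kn: "4 * R + 1 \<le> length ss"
    define n where "n = length ss"
    have ss: "set ss \<subseteq> SG" using sr by (simp add: simple_relation_def)
    let ?g = "gg ss"
    have gin: "?g t \<in> carrier G" for t using gg_in[OF ss] .
    have gn: "?g n = \<one>" using sr by (simp add: simple_relation_def gg_def n_def)
    show "\<exists>i j. 1 \<le> i \<and> i \<le> R + 1 \<and> i < j \<and> j \<le> length ss \<and>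
       dX (?g (i - 1)) (?g j) \<le> 2 * R \<and> dX (?g (i - 1)) (?g j) \<le> j - i \<and>
       dX (?g (i - 1)) (?g j) + j + 2 \<le> length ss + i"
    proof (cases "dX (?g 0) (?g (2 * R)) < 2 * R")
      case True
      then show ?thesis using kn by (intro exI[of _ 1] exI[of _ "2 * R"]) (simp add: R_def)
    next
      case False
      have le2R: "2 * R \<le> n" using kn n_def by simp
      have d2R: "dX (?g 0) (?g (2 * R)) = 2 * R" using False gg_dist[OF ss, of 0 "2 * R"] le2R n_def by simp
      define A where "A = map ?g [0..<Suc (2 * R)]"
      have wA: "wb (carrier G) adj A (?g 0) (?g (2 * R))" unfolding A_def using gg_walk[OF ss, of 0 "2 * R"] le2R n_def by simp
      have lA: "length A = Suc (dX (?g 0) (?g (2 * R)))" using d2R by (simp add: A_def)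
      have Anth: "A ! s = ?g s" if "s \<le> 2 * R" for s using that by (simp add: A_def nth_map nth_upt del: upt_Suc)
      have geoA: "dX (?g s) (?g t) = t - s" if "s \<le> t" "t \<le> 2 * R" for s t
        using X.gd_geod[OF wA lA, of s t] that Anth by (simp add: A_def)
      define N where "N = ?dT (f (?g 0)) (f (?g (2 * R)))"
      obtain P where wP: "wb V E P (f (?g 0)) (f (?g (2 * R)))" and lP: "length P = Suc N"
        using T.gd_ex[OF fV[OF gin] fV[OF gin]] N_def by blast
      let ?p = "\<lambda>t. P ! t"
      have pbtw: "T.btw (f (?g 0)) (?p t) (f (?g (2 * R)))" if "t \<le> N" for t
        using T.on_geod_btw[OF wP lP[unfolded N_def]] that lP by simp
      have pV: "?p t \<in> V" if "t \<le> N" for t using pbtw[OF that] by (simp add: T.btw_def)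
      have zstep: "?dT (f (?g s)) (f (?g (Suc s))) \<le> J" if "s < n" for s
        using Q3[OF gin gin] X.gd_edge[OF gg_adj[OF ss]] that n_def by simp
      have cover: "\<exists>s\<le>2 * R. ?dT (f (?g s)) (?p t) \<le> J" if "t \<le> N" for t
        using T.btw_chain[of "2 * R" "\<lambda>s. f (?g s)" J "?p t"] fV gin zstep le2R pbtw[OF that] by auto
      define Lo where "Lo t \<longleftrightarrow> (\<exists>s\<le>R. ?dT (f (?g s)) (?p t) \<le> J)" for t
      define Hi where "Hi t \<longleftrightarrow> (\<exists>s. R \<le> s \<and> s \<le> 2 * R \<and> ?dT (f (?g s)) (?p t) \<le> J)" for t
      have LoHi: "Lo t \<or> Hi t" if "t \<le> N" for t
        using cover[OF that] unfolding Lo_def Hi_def by (meson nat_le_linear)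
      have p0: "?p 0 = f (?g 0)" using wP wb_nonempty[OF wP] by (simp add: wb_def hd_conv_nth[symmetric])
      have pN: "?p N = f (?g (2 * R))" using wP lP wb_nonempty[OF wP] by (simp add: wb_def last_conv_nth)
      have Lo0: "Lo 0" unfolding Lo_def using p0 T.gd_refl fV[OF gin] by (intro exI[of _ 0]) simp
      have HiN: "Hi N" unfolding Hi_def using pN T.gd_refl fV[OF gin] by (intro exI[of _ "2 * R"]) simp
      obtain t t' where tt: "Lo t" "Hi t'" "t \<le> N" "t' \<le> N" "t' = t \<or> t' = Suc t"
      proof -
        define M where "M = Max {t. t \<le> N \<and> Lo t}"
        have fin: "finite {t. t \<le> N \<and> Lo t}" by simp
        have M: "M \<le> N \<and> Lo M" using Max_in[OF fin] Lo0 unfolding M_def by blast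
        show ?thesis
        proof (cases "M = N")
          case True then show ?thesis using that[of N N] M HiN by simp
        next
          case False
          then have "Suc M \<le> N" using M by simp
          moreover have "\<not> Lo (Suc M)"
          proof
            assume "Lo (Suc M)"
            then have "Suc M \<in> {t. t \<le> N \<and> Lo t}" using \<open>Suc M \<le> N\<close> by simp
            then have "Suc M \<le> M" unfolding M_def by (rule Max_ge[OF fin])
            then show False by simp
          qed
          ultimately have "Hi (Suc M)" using LoHi[of "Suc M"] by blast
          then show ?thesis using that[of M "Suc M"] M \<open>Suc M \<le> N\<close> by simp
        qed
      qed
      have dtt: "?dT (?p t) (?p t') \<le> 1"
      proof (cases "t' = t")
        case True then show ?thesis using T.gd_refl pV[OF tt(3)] by simp
      next
        case False
        then have "t' = Suc t" using tt(5) by simp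
        then show ?thesis using T.gd_geod[OF wP lP[unfolded N_def], of t t'] lP tt(4) by simp
      qed
      obtain s1 where s1: "s1 \<le> R" "?dT (f (?g s1)) (?p t) \<le> J" using tt(1) unfolding Lo_def by blast
      obtain s2 where s2: "R \<le> s2" "s2 \<le> 2 * R" "?dT (f (?g s2)) (?p t') \<le> J" using tt(2) unfolding Hi_def by blast
      have "?dT (f (?g s1)) (f (?g s2)) \<le> ?dT (f (?g s1)) (?p t) + ?dT (?p t) (?p t') + ?dT (?p t') (f (?g s2))"
        using T.gd_tri[OF fV[OF gin[of s1]] pV[OF tt(3)] fV[OF gin[of s2]]] T.gd_tri[OF pV[OF tt(3)] pV[OF tt(4)] fV[OF gin[of s2]]]
        by linarith
      also have "\<dots> \<le> 2 * J + 1" using s1 s2 dtt T.gd_sym[OF pV[OF tt(4)] fV[OF gin[of s2]]] by simp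
      finally have d12: "?dT (f (?g s1)) (f (?g s2)) \<le> 2 * J + 1" .
      have "real (dX (?g s1) (?g s2)) \<le> L * (real (?dT (f (?g s1)) (f (?g s2))) + C)" using Q2[OF gin[of s1] gin[of s2]] .
      also have "\<dots> \<le> K1" unfolding K1_def using d12 L by (intro mult_left_mono) auto
      finally have X12: "real (dX (?g s1) (?g s2)) \<le> K1" .
      have "dX (?g R) (?g s1) = dX (?g s1) (?g R)" using X.gd_sym[OF gin[of R] gin[of s1]] .
      also have "\<dots> = R - s1" using geoA s1 by (simp add: R_def)
      also have "\<dots> \<le> s2 - s1" using s2 by simp
      also have "\<dots> = dX (?g s1) (?g s2)" using geoA s1 s2 by (simp add: R_def)
      finally have "real (dX (?g R) (?g s1)) \<le> K1" using X12 by linarith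
      then have "real (?dT (f (?g R)) (f (?g s1))) \<le> L * K1 + C"
        using Q1[OF gin[of R] gin[of s1]] L by (smt (verit) mult_left_mono)
      moreover have "?dT (f (?g R)) (?p t) \<le> ?dT (f (?g R)) (f (?g s1)) + ?dT (f (?g s1)) (?p t)"
        using T.gd_tri[OF fV[OF gin[of R]] fV[OF gin[of s1]] pV[OF tt(3)]] .
      ultimately have DR: "real (?dT (f (?g R)) (?p t)) \<le> D0" using s1 unfolding D0_def by linarith
      have bB: "T.btw (f (?g (2 * R + 0))) (?p t) (f (?g (2 * R + (n - 2 * R))))"
        using T.btw_sym[OF pbtw[OF tt(3)] fV[OF gin[of 0]] fV[OF gin[of "2 * R"]]] le2R gn gg_0 by simp
      obtain u where u: "u \<le> n - 2 * R" "?dT (f (?g (2 * R + u))) (?p t) \<le> J"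
        using T.btw_chain[of "n - 2 * R" "\<lambda>u. f (?g (2 * R + u))" J "?p t"] fV gin zstep le2R bB by auto
      define j where "j = 2 * R + u"
      have "?dT (f (?g j)) (f (?g R)) \<le> ?dT (f (?g j)) (?p t) + ?dT (?p t) (f (?g R))"
        using T.gd_tri[OF fV[OF gin[of j]] pV[OF tt(3)] fV[OF gin[of R]]] .
      then have "real (?dT (f (?g j)) (f (?g R))) \<le> real J + D0"
        using DR u(2) T.gd_sym[OF pV[OF tt(3)] fV[OF gin[of R]]] unfolding j_def by simp
      then have "real (dX (?g j) (?g R)) \<le> K2"
        using Q2[OF gin[of j] gin[of R]] L unfolding K2_def by (smt (verit) mult_left_mono)
      then have "real (dX (?g j) (?g R)) \<le> real \<Delta>" unfolding \<Delta>_def by linarith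
      then have dj: "dX (?g R) (?g j) \<le> \<Delta>" using X.gd_sym[OF gin[of j] gin[of R]] by simp
      have jn: "j \<le> n" "2 * R \<le> j" using u(1) le2R unfolding j_def by auto
      have e: "R + 1 - 1 = R" by simp
      show ?thesis unfolding e
        apply (rule exI[of _ "R + 1"], rule exI[of _ j], intro conjI)
        using dj jn unfolding n_def[symmetric] e by (simp_all add: R_def)
    qed
  qed
  then show ?thesis by blast
qed

end




context cay begin

lemma grp_c1: "a \<in> carrier G \<Longrightarrow> c \<in> carrier G \<Longrightarrow> a \<otimes> (inv a \<otimes> c) = c"
  by (simp add: m_assoc[symmetric])

lemma grp_c2: "a \<in> carrier G \<Longrightarrow> c \<in> carrier G \<Longrightarrow> inv a \<otimes> (a \<otimes> c) = c"
  by (simp add: m_assoc[symmetric])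

lemma grp_c3: "a \<in> carrier G \<Longrightarrow> b \<in> carrier G \<Longrightarrow> c \<in> carrier G \<Longrightarrow>
    inv (inv a \<otimes> b) \<otimes> (inv a \<otimes> c) = inv b \<otimes> c"
  by (simp add: inv_mult_group m_assoc grp_c1)

lemma cycle_chord:
  assumes ch: "chordal G S i0 k m" and W: "wb (carrier G) adj W w w"
    and dW: "distinct (butlast W)" and nk: "k \<le> length W - 1" and n3: "2 < length W - 1"
  shows "\<exists>i j. 1 \<le> i \<and> i \<le> i0 \<and> i < j \<and> j \<le> length W - 1 \<and>
       dX (W ! (i - 1)) (W ! j) \<le> m \<and> dX (W ! (i - 1)) (W ! j) \<le> j - i \<and>
       dX (W ! (i - 1)) (W ! j) + j + 2 \<le> length W - 1 + i"
proof -
  define n where "n = length W - 1"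
  have lW: "length W = Suc n" using n_def n3 by simp
  have Win: "W ! t \<in> carrier G" if "t \<le> n" for t
    using W that lW unfolding wb_def by (auto dest!: is_walk_set)
  have Wadj: "adj (W ! t) (W ! Suc t)" if "t < n" for t
    using W that lW unfolding wb_def is_walk_def by auto
  have W0: "W ! 0 = w" and Wn: "W ! n = w" using W lW wb_nonempty[OF W]
    by (auto simp: wb_def hd_conv_nth last_conv_nth)
  define ss where "ss = map (\<lambda>t. inv (W ! t) \<otimes> W ! Suc t) [0..<n]"
  have lss: "length ss = n" by (simp add: ss_def)
  have ssn: "ss ! t = inv (W ! t) \<otimes> W ! Suc t" if "t < n" for t using that by (simp add: ss_def)
  have ssSG: "set ss \<subseteq> SG"
  proof
    fix s assume "s \<in> set ss"
    then obtain t where t: "t < n" "s = ss ! t" by (metis in_set_conv_nth lss)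
    obtain s' where s': "s' \<in> SG" "W ! Suc t = W ! t \<otimes> s'" using Wadj[OF t(1)] by (auto simp: adj_def)
    have "s' \<in> carrier G" using s' SG_sub by auto
    then have "inv (W ! t) \<otimes> W ! Suc t = s'" using s' Win t by (simp add: m_assoc[symmetric])
    then show "s \<in> SG" using t ssn s' by simp
  qed
  have ggW: "W ! t = W ! 0 \<otimes> gg ss t" if "t \<le> n" for t
    using that
  proof (induction t)
    case 0 then show ?case using Win by (simp add: gg_0)
  next
    case (Suc t)
    have gs: "gg ss (Suc t) = gg ss t \<otimes> ss ! t" using gg_Suc[OF ssSG] Suc lss by simp
    have "W ! 0 \<otimes> gg ss (Suc t) = (W ! 0 \<otimes> gg ss t) \<otimes> ss ! t"
    proof -
      have "ss ! t \<in> carrier G" using ssSG SG_sub Suc lss by (metis Suc_le_lessD nth_mem subset_iff)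
      then show ?thesis using gs gg_in[OF ssSG] Win[of 0] by (simp add: m_assoc)
    qed
    also have "\<dots> = W ! t \<otimes> (inv (W ! t) \<otimes> W ! Suc t)" using Suc ssn by simp
    also have "\<dots> = W ! Suc t"
    proof -
      have a: "W ! t \<in> carrier G" "W ! Suc t \<in> carrier G" using Win[of t] Win[of "Suc t"] Suc.prems by auto
      show ?thesis using a by (simp add: m_assoc[symmetric])
    qed
    finally show ?case by simp
  qed
  have ggi: "gg ss t = inv (W ! 0) \<otimes> W ! t" if "t \<le> n" for t
    using ggW[OF that] Win[OF that] Win[of 0] gg_in[OF ssSG]
    by (metis inv_closed l_inv l_one m_assoc le0)
  have dWn: "W ! a \<noteq> W ! b" if "a < b" "b < n" for a b
  proof -
    have "butlast W ! a = W ! a" "butlast W ! b = W ! b" using that lW by (auto simp: nth_butlast)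
    moreover have "length (butlast W) = n" using lW by simp
    ultimately show ?thesis using dW that by (metis nth_eq_iff_index_eq order.strict_trans less_irrefl)
  qed
  have sr: "simple_relation G S ss"
    unfolding simple_relation_def
  proof (intro conjI allI impI)
    show "2 < length ss" using lss n3 n_def by simp
    show "set ss \<subseteq> SG" by (rule ssSG)
    show "word_prod G ss = \<one>"
    proof -
      have "word_prod G ss = gg ss n" using lss by (simp add: gg_def)
      moreover have "w \<in> carrier G" using Win[of 0] W0 by simp
      ultimately show ?thesis using ggi[of n] W0 Wn by simp
    qed
    fix p q assume pq: "1 \<le> p \<and> p \<le> q \<and> q \<le> length ss"
    have "word_prod G (subword ss p q) = inv (gg ss (p - 1)) \<otimes> gg ss q"
      using gg_subword[OF ssSG] pq by simp
    also have "\<dots> = inv (W ! (p - 1)) \<otimes> W ! q"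
    proof -
      have pn: "p - 1 \<le> n" "q \<le> n" using pq lss by auto
      show ?thesis using ggi[OF pn(1)] ggi[OF pn(2)] Win[of 0] Win[OF pn(1)] Win[OF pn(2)]
        by (simp add: grp_c3)
    qed
    finally have e: "word_prod G (subword ss p q) = inv (W ! (p - 1)) \<otimes> W ! q" .
    have "(inv (W ! (p - 1)) \<otimes> W ! q = \<one>) \<longleftrightarrow> W ! (p - 1) = W ! q"
      using Win[of "p - 1"] Win[of q] pq lss
      by (metis inv_closed inv_inv l_inv r_one m_assoc inv_equality le_trans diff_le_self)
    also have "\<dots> \<longleftrightarrow> (p, q) = (1, length ss)"
    proof
      assume eq: "W ! (p - 1) = W ! q"
      show "(p, q) = (1, length ss)"
      proof (cases "q < n")
        case True
        have "p - 1 < q" using pq by linarith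
        then show ?thesis using dWn[of "p - 1" q] eq True by blast
      next
        case False
        then have "q = n" using pq lss by simp
        then have "W ! (p - 1) = W ! 0" using eq W0 Wn by simp
        then have "p - 1 = 0" using dWn[of 0 "p - 1"] pq lss \<open>q = n\<close> n3 n_def
          by (metis bot_nat_0.not_eq_extremum diff_less le_trans less_one not_le)
        then show ?thesis using \<open>q = n\<close> lss pq by simp
      qed
    next
      assume "(p, q) = (1, length ss)"
      then show "W ! (p - 1) = W ! q" using W0 Wn lss by simp
    qed
    finally show "word_prod G (subword ss p q) = \<one> \<longleftrightarrow> (p, q) = (1, length ss)" using e by simp
  qed
  obtain i j where ij: "1 \<le> i" "i \<le> i0" "i < j" "j \<le> n"
     "dX (gg ss (i - 1)) (gg ss j) \<le> m" "dX (gg ss (i - 1)) (gg ss j) \<le> j - i"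
     "dX (gg ss (i - 1)) (gg ss j) + j + 2 \<le> n + i"
    using chordal_dest[OF ch sr] nk lss n_def by auto
  have "dX (W ! (i - 1)) (W ! j) \<le> dX (gg ss (i - 1)) (gg ss j)"
  proof -
    obtain ts where ts: "set ts \<subseteq> SG" "length ts = dX (gg ss (i - 1)) (gg ss j)"
      "gg ss (i - 1) \<otimes> word_prod G ts = gg ss j"
      using dX_word_ex[OF gg_in[OF ssSG] gg_in[OF ssSG]] by blast
    have "W ! (i - 1) \<otimes> word_prod G ts = W ! j"
      using ggW[of "i - 1"] ggW[of j] ij ts(3) Win[of 0] gg_in[OF ssSG] ts(1) SG_sub wp_closed
      by (simp add: m_assoc)
    then show ?thesis using dX_word[OF Win ts(1)] ts(2) ij by simp
  qed
  then show ?thesis using ij n_def by (intro exI[of _ i] exI[of _ j]) simp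
qed

end




context cay begin

lemma bottleneck:
  assumes ch: "chordal G S i0 k m"
  shows "\<exists>\<Delta>. \<forall>x w y xs. x \<in> carrier G \<longrightarrow> w \<in> carrier G \<longrightarrow> y \<in> carrier G \<longrightarrow>
     dX x w + dX w y = dX x y \<longrightarrow> wb (carrier G) adj xs x y \<longrightarrow> (\<exists>p\<in>set xs. dX p w \<le> \<Delta>)"
proof (intro exI allI impI)
  define \<Delta> where "\<Delta> = k + m + i0 + 2"
  fix x w y P
  assume xc: "x \<in> carrier G" and wc: "w \<in> carrier G" and yc: "y \<in> carrier G"
    and geo: "dX x w + dX w y = dX x y" and wP: "wb (carrier G) adj P x y"
  show "\<exists>p\<in>set P. dX p w \<le> \<Delta>"
  proof (rule ccontr)
    assume "\<not> (\<exists>p\<in>set P. dX p w \<le> \<Delta>)"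
    then have far: "\<And>p. p \<in> set P \<Longrightarrow> \<Delta> < dX p w" by force
    define a where "a = dX x w"
    define b where "b = dX w y"
    have "x \<in> set P" "y \<in> set P" using wP wb_nonempty[OF wP] unfolding wb_def
      by (metis hd_in_set, metis last_in_set)
    then have aD: "\<Delta> < a" and bD: "\<Delta> < b" using far X.gd_sym[OF wc yc] unfolding a_def b_def by auto
    obtain g1 where g1: "wb (carrier G) adj g1 x w" "length g1 = Suc a" using X.gd_ex xc wc a_def by blast
    obtain g2 where g2: "wb (carrier G) adj g2 w y" "length g2 = Suc b" using X.gd_ex yc wc b_def by blast
    define \<gamma> where "\<gamma> = g1 @ tl g2"
    have w\<gamma>: "wb (carrier G) adj \<gamma> x y" unfolding \<gamma>_def by (rule wb_append[OF g1(1) g2(1)])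
    have l\<gamma>: "length \<gamma> = Suc (dX x y)" using g1 g2 geo unfolding \<gamma>_def a_def b_def by simp
    have l\<gamma>': "length \<gamma> = Suc (a + b)" using l\<gamma> geo a_def b_def by simp
    have \<gamma>a: "\<gamma> ! a = w"
    proof -
      have "g1 ! a = last g1" using g1(2) wb_nonempty[OF g1(1)] by (simp add: last_conv_nth)
      then show ?thesis using g1 unfolding \<gamma>_def by (simp add: nth_append wb_def)
    qed
    have gd: "dX (\<gamma> ! s) (\<gamma> ! t) = t - s" if "s \<le> t" "t \<le> a + b" for s t
      using X.gd_geod[OF w\<gamma> l\<gamma>] that l\<gamma>' by simp
    have \<gamma>in: "\<gamma> ! t \<in> carrier G" if "t \<le> a + b" for t
      using w\<gamma> that l\<gamma>' unfolding wb_def by (auto dest!: is_walk_set)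
    have gds: "dX (\<gamma> ! t) (\<gamma> ! s) = t - s" if "s \<le> t" "t \<le> a + b" for s t
      using gd[OF that] X.gd_sym \<gamma>in that by (metis le_trans)
    have d\<gamma>: "distinct \<gamma>" by (rule X.gd_shortest_distinct[OF w\<gamma> l\<gamma>])
    define u where "u = \<gamma> ! (a - \<Delta>)"
    define v where "v = \<gamma> ! (a + \<Delta>)"
    define Q' where "Q' = (drop (a + \<Delta>) \<gamma> @ tl (rev P)) @ tl (take (Suc (a - \<Delta>)) \<gamma>)"
    have wQ': "wb (carrier G) adj Q' v u"
    proof -
      have w1: "wb (carrier G) adj (drop (a + \<Delta>) \<gamma>) v y" using wb_drop[OF w\<gamma>, of "a + \<Delta>"] bD l\<gamma>' v_def by simp
      have w2: "wb (carrier G) adj (rev P) y x" using wb_rev[OF _ wP] adj_sym by blast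
      have w3: "wb (carrier G) adj (take (Suc (a - \<Delta>)) \<gamma>) x u" using wb_take[OF w\<gamma>, of "a - \<Delta>"] l\<gamma>' u_def by simp
      show ?thesis unfolding Q'_def by (rule wb_append[OF wb_append[OF w1 w2] w3])
    qed
    obtain Q where wQ: "wb (carrier G) adj Q v u" and dQ: "distinct Q" and sQ: "set Q \<subseteq> set Q'"
      using wb_loop_erase[OF wQ'] by blast
    have near: "z = u \<or> z = v" if z: "z \<in> set Q'" "dX z w \<le> \<Delta>" for z
    proof -
      have "z \<in> set (drop (a + \<Delta>) \<gamma>) \<or> z \<in> set P \<or> z \<in> set (take (Suc (a - \<Delta>)) \<gamma>)"
      proof -
        have stl: "set (tl xs) \<subseteq> set xs" for xs :: "'g list" by (cases xs) auto
        have "set Q' \<subseteq> set (drop (a + \<Delta>) \<gamma>) \<union> set (rev P) \<union> set (take (Suc (a - \<Delta>)) \<gamma>)"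
          unfolding Q'_def using stl[of "rev P"] stl[of "take (Suc (a - \<Delta>)) \<gamma>"] by auto
        then show ?thesis using z(1) by auto
      qed
      then show ?thesis
      proof (elim disjE)
        assume "z \<in> set (drop (a + \<Delta>) \<gamma>)"
        then obtain t where t: "t < length \<gamma> - (a + \<Delta>)" "z = \<gamma> ! (a + \<Delta> + t)"
          by (auto simp: in_set_conv_nth)
        have "dX z w = \<Delta> + t" using gds[of a "a + \<Delta> + t"] t l\<gamma>' \<gamma>a by simp
        then have "t = 0" using z by simp
        then show ?thesis using t v_def by simp
      next
        assume "z \<in> set P" then show ?thesis using far z by force
      next
        assume "z \<in> set (take (Suc (a - \<Delta>)) \<gamma>)"
        then obtain t where t: "t < Suc (a - \<Delta>)" "z = \<gamma> ! t"
          by (auto simp: in_set_conv_nth)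
        have "dX z w = a - t" using gd[of t a] t aD \<gamma>a by simp
        then have "t = a - \<Delta>" using z t aD by simp
        then show ?thesis using t u_def by simp
      qed
    qed
    have duv: "dX u v = 2 * \<Delta>" using gd[of "a - \<Delta>" "a + \<Delta>"] aD bD u_def v_def by simp
    have uv: "u \<noteq> v"
    proof
      assume "u = v"
      moreover have "u \<in> carrier G" using \<gamma>in[of "a - \<Delta>"] u_def by simp
      ultimately have "dX u v = 0" using X.gd_refl by metis
      then show False using duv \<Delta>_def by simp
    qed
    define mid where "mid = butlast (tl Q)"
    have Qform: "Q = v # mid @ [u]"
    proof -
      obtain q qs where Q: "Q = q # qs" using wb_nonempty[OF wQ] by (cases Q) auto
      have "q = v" using wQ Q by (simp add: wb_def)
      moreover have "qs \<noteq> []" using wQ Q uv \<open>q = v\<close> by (auto simp: wb_def)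
      moreover have "last qs = u" using wQ Q \<open>qs \<noteq> []\<close> by (simp add: wb_def)
      ultimately show ?thesis using Q append_butlast_last_id[of qs] unfolding mid_def by simp
    qed
    have midfar: "\<Delta> < dX z w" if "z \<in> set mid" for z
    proof (rule ccontr)
      assume "\<not> \<Delta> < dX z w"
      moreover have "z \<in> set Q'" using that sQ Qform by auto
      ultimately have "z = u \<or> z = v" using near by simp
      then show False using dQ Qform that by auto
    qed
    define W1 where "W1 = drop a (take (Suc (a + \<Delta>)) \<gamma>)"
    define W3 where "W3 = drop (a - \<Delta>) (take (Suc a) \<gamma>)"
    have lW1: "length W1 = Suc \<Delta>" using l\<gamma>' bD unfolding W1_def by simp
    have lW3: "length W3 = Suc \<Delta>" using l\<gamma>' aD unfolding W3_def by simp
    have W1n: "W1 ! t = \<gamma> ! (a + t)" if "t \<le> \<Delta>" for t using that l\<gamma>' bD unfolding W1_def by simp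
    have W3n: "W3 ! t = \<gamma> ! (a - \<Delta> + t)" if "t \<le> \<Delta>" for t using that l\<gamma>' aD unfolding W3_def by simp
    have wW1: "wb (carrier G) adj W1 w v"
      using wb_drop[OF wb_take[OF w\<gamma>, of "a + \<Delta>"], of a] l\<gamma>' bD \<gamma>a v_def unfolding W1_def by simp
    have wW3: "wb (carrier G) adj W3 u w"
      using wb_drop[OF wb_take[OF w\<gamma>, of a], of "a - \<Delta>"] l\<gamma>' aD \<gamma>a u_def unfolding W3_def by simp
    define Wc where "Wc = W1 @ mid @ W3"
    have hW3: "W3 = u # tl W3" using wW3 wb_nonempty[OF wW3] by (cases W3) (auto simp: wb_def)
    have wWc: "wb (carrier G) adj Wc w w"
    proof -
      have "wb (carrier G) adj ((W1 @ tl Q) @ tl W3) w w" by (rule wb_append[OF wb_append[OF wW1 wQ] wW3])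
      moreover have "(W1 @ tl Q) @ tl W3 = Wc" unfolding Wc_def using Qform hW3
        by (metis append.assoc append_Cons append_Nil list.sel(3))
      ultimately show ?thesis by simp
    qed
    define n where "n = length Wc - 1"
    have n: "n = 2 * \<Delta> + 1 + length mid" unfolding n_def Wc_def using lW1 lW3 by simp
    have bWc: "butlast Wc = W1 @ mid @ butlast W3" proof -
      have "W3 \<noteq> []" using lW3 by auto
      then show ?thesis unfolding Wc_def by (simp add: butlast_append)
    qed
    have sW1: "set W1 \<subseteq> {z. dX z w \<le> \<Delta> \<and> a \<le> dX x z}"
    proof
      fix z assume "z \<in> set W1"
      then obtain t where t: "t \<le> \<Delta>" "z = \<gamma> ! (a + t)" using lW1 W1n by (metis in_set_conv_nth less_Suc_eq_le)
      have "dX z w = t" using gds[of a "a + t"] t bD \<gamma>a by simp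
      moreover have "dX x z = a + t"
      proof -
        have "\<gamma> ! 0 = x" using w\<gamma> wb_nonempty[OF w\<gamma>] by (simp add: wb_def hd_conv_nth)
        then show ?thesis using gd[of 0 "a + t"] t bD by simp
      qed
      ultimately show "z \<in> {z. dX z w \<le> \<Delta> \<and> a \<le> dX x z}" using t by simp
    qed
    have sW3: "set (butlast W3) \<subseteq> {z. dX z w \<le> \<Delta> \<and> dX x z < a}"
    proof
      fix z assume "z \<in> set (butlast W3)"
      then obtain t where t: "t < \<Delta>" "z = W3 ! t" using lW3
        by (metis in_set_conv_nth length_butlast nth_butlast diff_Suc_1)
      then have zt: "z = \<gamma> ! (a - \<Delta> + t)" using W3n by simp
      have "dX z w = \<Delta> - t" using gd[of "a - \<Delta> + t" a] zt t aD \<gamma>a by simp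
      moreover have "dX x z = a - \<Delta> + t"
      proof -
        have "\<gamma> ! 0 = x" using w\<gamma> wb_nonempty[OF w\<gamma>] by (simp add: wb_def hd_conv_nth)
        then show ?thesis using gd[of 0 "a - \<Delta> + t"] zt t aD by simp
      qed
      ultimately show "z \<in> {z. dX z w \<le> \<Delta> \<and> dX x z < a}" using t aD by simp
    qed
    have dWc: "distinct (butlast Wc)"
    proof -
      have "distinct W1" unfolding W1_def using d\<gamma> by simp
      moreover have "distinct (butlast W3)" unfolding W3_def using d\<gamma> by (simp add: distinct_butlast)
      moreover have "distinct mid" using dQ Qform by simp
      moreover have "set W1 \<inter> set mid = {}" using sW1 midfar by fastforce
      moreover have "set W1 \<inter> set (butlast W3) = {}" using sW1 sW3 by fastforce
      moreover have "set mid \<inter> set (butlast W3) = {}" using sW3 midfar by fastforce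
      ultimately show ?thesis unfolding bWc by auto
    qed
    obtain i j where ij: "1 \<le> i" "i \<le> i0" "i < j" "j \<le> n"
       "dX (Wc ! (i - 1)) (Wc ! j) \<le> m" "dX (Wc ! (i - 1)) (Wc ! j) \<le> j - i"
       "dX (Wc ! (i - 1)) (Wc ! j) + j + 2 \<le> n + i"
      using cycle_chord[OF ch wWc dWc] n n_def \<Delta>_def by fastforce
    have pi: "Wc ! (i - 1) = \<gamma> ! (a + (i - 1))"
    proof -
      have il: "i - 1 < length W1" "i - 1 \<le> \<Delta>" using ij(2) lW1 \<Delta>_def by auto
      have "Wc ! (i - 1) = W1 ! (i - 1)" unfolding Wc_def using il(1) by (simp add: nth_append)
      then show ?thesis using W1n[OF il(2)] by simp
    qed
    show False
    proof (cases "j \<le> \<Delta>")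
      case True
      then have "Wc ! j = \<gamma> ! (a + j)" using lW1 W1n unfolding Wc_def by (simp add: nth_append)
      then have "dX (Wc ! (i - 1)) (Wc ! j) = j - (i - 1)" using pi gd[of "a + (i - 1)" "a + j"] ij True bD by simp
      then show False using ij by simp
    next
      case False
      show False
      proof (cases "j < Suc \<Delta> + length mid")
        case True
        have jl: "\<not> j < length W1" "j - length W1 < length mid" using True False lW1 by auto
        then have "Wc ! j = mid ! (j - length W1)" unfolding Wc_def by (simp add: nth_append)
        then have "Wc ! j \<in> set mid" using jl by simp
        then have f: "\<Delta> < dX (Wc ! j) w" by (rule midfar)
        have Wcin: "Wc ! t \<in> carrier G" if "t \<le> n" for t
        proof -
          have "t < length Wc" using that n_def wb_nonempty[OF wWc] by (cases Wc) auto
          then show ?thesis using wWc unfolding wb_def by (auto dest!: is_walk_set)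
        qed
        have jn: "j \<le> n" "i - 1 \<le> n" using ij by auto
        have "dX (Wc ! (i - 1)) w = i - 1" using pi gds[of a "a + (i - 1)"] \<gamma>a ij bD \<Delta>_def by simp
        moreover have "dX (Wc ! j) w \<le> dX (Wc ! j) (Wc ! (i - 1)) + dX (Wc ! (i - 1)) w"
          by (rule X.gd_tri[OF Wcin[OF jn(1)] Wcin[OF jn(2)] wc])
        moreover have "dX (Wc ! j) (Wc ! (i - 1)) = dX (Wc ! (i - 1)) (Wc ! j)"
          by (rule X.gd_sym[OF Wcin[OF jn(1)] Wcin[OF jn(2)]])
        ultimately show False using f ij \<Delta>_def by linarith
      next
        case False2: False
        define t where "t = j - Suc \<Delta> - length mid"
        have tD: "t \<le> \<Delta>" using ij n unfolding t_def by simp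
        have jl: "\<not> j < length W1" "\<not> j - length W1 < length mid" "t = j - length W1 - length mid"
          using False False2 lW1 unfolding t_def by auto
        then have "Wc ! j = W3 ! t" unfolding Wc_def by (simp add: nth_append)
        then have "Wc ! j = \<gamma> ! (a - \<Delta> + t)" using W3n tD by simp
        then have "dX (Wc ! (i - 1)) (Wc ! j) = a + (i - 1) - (a - \<Delta> + t)"
          using pi gds[of "a - \<Delta> + t" "a + (i - 1)"] tD aD bD ij \<Delta>_def by simp
        moreover have "Suc \<Delta> + length mid \<le> j" using False2 by simp
        ultimately show False using ij(7) n tD aD unfolding t_def by arith
      qed
    qed
  qed
qed

end




lemma set_tl_sub: "x \<in> set (tl xs) \<Longrightarrow> x \<in> set xs"
  by (cases xs) auto

locale cayB = cay G S for G :: "('g, 'b) monoid_scheme" (structure) and S +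
  fixes \<Delta> :: nat
  assumes BN: "\<And>x w y xs. x \<in> carrier G \<Longrightarrow> w \<in> carrier G \<Longrightarrow> y \<in> carrier G \<Longrightarrow>
     dX x w + dX w y = dX x y \<Longrightarrow> wb (carrier G) adj xs x y \<Longrightarrow> \<exists>p\<in>set xs. dX p w \<le> \<Delta>"
begin

abbreviation lv where "lv x \<equiv> dX \<one> x"

definition conn where
  "conn n x y \<longleftrightarrow> (\<exists>xs. wb (carrier G) adj xs x y \<and> (\<forall>z\<in>set xs. n \<le> lv z))"

definition same where
  "same x y \<longleftrightarrow> x \<in> carrier G \<and> y \<in> carrier G \<and> lv x = lv y \<and> conn (lv x) x y"

lemma dX_tri: "x \<in> carrier G \<Longrightarrow> y \<in> carrier G \<Longrightarrow> z \<in> carrier G \<Longrightarrow> dX x z \<le> dX x y + dX y z"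
  by (rule X.gd_tri)

lemma dX_sym: "x \<in> carrier G \<Longrightarrow> y \<in> carrier G \<Longrightarrow> dX x y = dX y x"
  by (rule X.gd_sym)

lemma same_refl: "x \<in> carrier G \<Longrightarrow> same x x"
  unfolding same_def conn_def by (intro conjI exI[of _ "[x]"]) auto

lemma same_sym: "same x y \<Longrightarrow> same y x"
proof -
  assume a: "same x y"
  then obtain xs where xs: "wb (carrier G) adj xs x y" "\<forall>z\<in>set xs. lv x \<le> lv z"
    unfolding same_def conn_def by auto
  have "wb (carrier G) adj (rev xs) y x" using wb_rev[of adj, OF _ xs(1)] adj_sym by blast
  moreover have "\<forall>z\<in>set (rev xs). lv y \<le> lv z" using xs(2) a by (simp add: same_def)
  ultimately show ?thesis using a unfolding same_def conn_def by auto
qed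

lemma same_trans: "same x y \<Longrightarrow> same y z \<Longrightarrow> same x z"
proof -
  assume a: "same x y" "same y z"
  then obtain xs ys where xs: "wb (carrier G) adj xs x y" "\<forall>z\<in>set xs. lv x \<le> lv z"
    and ys: "wb (carrier G) adj ys y z" "\<forall>z\<in>set ys. lv x \<le> lv z"
    unfolding same_def conn_def by auto
  have "wb (carrier G) adj (xs @ tl ys) x z" by (rule wb_append[OF xs(1) ys(1)])
  moreover have "\<forall>z\<in>set (xs @ tl ys). lv x \<le> lv z" using xs ys by (cases ys) auto
  ultimately show ?thesis using a unfolding same_def conn_def by auto
qed

lemma same_lv: "same x y \<Longrightarrow> lv x = lv y"
  by (simp add: same_def)

lemma same_in: "same x y \<Longrightarrow> x \<in> carrier G \<and> y \<in> carrier G"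
  by (simp add: same_def)

definition D :: nat where "D = 4 * \<Delta> + 2"

lemma geod_from1: "x \<in> carrier G \<Longrightarrow> \<exists>g. wb (carrier G) adj g \<one> x \<and> length g = Suc (lv x)"
  using X.gd_ex by blast

lemma same_diam: "same x y \<Longrightarrow> dX x y \<le> D"
proof -
  assume s: "same x y"
  have xc: "x \<in> carrier G" and yc: "y \<in> carrier G" using s by (auto simp: same_def)
  define n where "n = lv x"
  have ny: "lv y = n" using s n_def by (simp add: same_def)
  obtain P where wP: "wb (carrier G) adj P x y" and Pl: "\<forall>z\<in>set P. n \<le> lv z"
    using s unfolding same_def conn_def n_def by blast
  have tri1: "dX x y \<le> dX x \<one> + dX \<one> y" using dX_tri xc yc by simp
  show ?thesis
  proof (cases "n \<le> \<Delta> + 1")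
    case True
    then show ?thesis using tri1 dX_sym[OF xc one_closed] n_def ny unfolding D_def by simp
  next
    case False
    obtain gx where gx: "wb (carrier G) adj gx \<one> x" "length gx = Suc n" using geod_from1 xc n_def by blast
    obtain gy where gy: "wb (carrier G) adj gy \<one> y" "length gy = Suc n" using geod_from1 yc ny by blast
    define w where "w = gx ! (n - \<Delta> - 1)"
    have gxi: "dX \<one> (gx ! i) = i" "dX (gx ! i) x = n - i" if "i < Suc n" for i
      using X.gd_geod0[OF gx(1)] gx(2) that n_def by auto
    have wc: "w \<in> carrier G" using gx(1) gx(2) unfolding w_def wb_def by (auto dest!: is_walk_set)
    have lw: "lv w = n - \<Delta> - 1" and dwx: "dX w x = \<Delta> + 1" using gxi[of "n - \<Delta> - 1"] False w_def by auto
    have "wb (carrier G) adj (gy @ tl (rev P)) \<one> x"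
      by (rule wb_append[OF gy(1) wb_rev[OF _ wP]]) (rule adj_sym)
    then obtain p where p: "p \<in> set (gy @ tl (rev P))" "dX p w \<le> \<Delta>"
      using BN[OF one_closed wc xc] lw dwx n_def False by fastforce
    have pc: "p \<in> carrier G" using p(1) gy(1) wP unfolding wb_def
      by (auto dest!: is_walk_set set_tl_sub)
    have lvp: "lv p \<le> n - 1"
    proof -
      have "lv p \<le> lv w + dX w p" using dX_tri[OF one_closed wc pc] .
      then show ?thesis using lw p(2) dX_sym[OF wc pc] False by simp
    qed
    have "p \<in> set gy"
    proof (rule ccontr)
      assume "p \<notin> set gy"
      then have "p \<in> set (tl (rev P))" using p(1) by simp
      then have "p \<in> set P" by (auto dest: set_tl_sub)
      then show False using Pl lvp False by fastforce
    qed
    then obtain s where sl: "s < Suc n" "p = gy ! s" using gy(2) by (metis in_set_conv_nth)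
    have "dX \<one> p = s" "dX p y = n - s" using X.gd_geod0[OF gy(1)] gy(2) sl ny by auto
    moreover have "lv w \<le> lv p + dX p w" using dX_tri[OF one_closed pc wc] .
    ultimately have dpy: "dX p y \<le> 2 * \<Delta> + 1" using lw p(2) False by simp
    have "dX x y \<le> dX x w + dX w y" using dX_tri[OF xc wc yc] .
    also have "\<dots> \<le> dX x w + (dX w p + dX p y)" using dX_tri[OF wc pc yc] by simp
    finally have "dX x y \<le> dX x w + (dX w p + dX p y)" .
    moreover have e1: "dX x w = \<Delta> + 1" using dwx dX_sym[OF xc wc] by linarith
    moreover have e2: "dX w p \<le> \<Delta>" using p(2) dX_sym[OF wc pc] by linarith
    ultimately show ?thesis using dpy unfolding D_def by linarith
  qed
qed

end




context cayB begin

definition pred where "pred x = (SOME y. adj x y \<and> Suc (lv y) = lv x)"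

lemma pred_ex: assumes xc: "x \<in> carrier G" and pos: "0 < lv x"
  shows "adj x (pred x) \<and> Suc (lv (pred x)) = lv x"
proof -
  obtain g where g: "wb (carrier G) adj g \<one> x" "length g = Suc (lv x)" using geod_from1 xc by blast
  define y where "y = g ! (lv x - 1)"
  have wk: "\<forall>i. Suc i < length g \<longrightarrow> adj (g ! i) (g ! Suc i)" using g(1) unfolding wb_def is_walk_def by blast
  have "Suc (lv x - 1) < length g" using g(2) pos by simp
  then have "adj y (g ! Suc (lv x - 1))" using wk unfolding y_def by blast
  moreover have "g ! Suc (lv x - 1) = x" using g pos wb_nonempty[OF g(1)]
    by (auto simp: wb_def last_conv_nth)
  ultimately have "adj x y" using adj_sym by simp
  moreover have "lv y = lv x - 1" using X.gd_geod0(1)[OF g, of "lv x - 1"] pos g(2) unfolding y_def by simp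
  ultimately have "\<exists>y. adj x y \<and> Suc (lv y) = lv x" using pos by (intro exI[of _ y]) simp
  then show ?thesis unfolding pred_def by (rule someI_ex)
qed

lemma pred_in: "x \<in> carrier G \<Longrightarrow> 0 < lv x \<Longrightarrow> pred x \<in> carrier G"
  using pred_ex adj_in by blast

lemma adj_lv: "adj x y \<Longrightarrow> lv y \<le> Suc (lv x)"
proof -
  assume a: "adj x y"
  have "lv y \<le> lv x + dX x y" using dX_tri adj_in[OF a] by blast
  moreover have "dX x y \<le> 1" using X.gd_edge[OF a] .
  ultimately show ?thesis by simp
qed

lemma par_same:
  assumes s: "same x x'" and a: "adj x y" "Suc (lv y) = lv x" and a': "adj x' y'" "Suc (lv y') = lv x'"
  shows "same y y'"
proof -
  obtain P where P: "wb (carrier G) adj P x x'" "\<forall>z\<in>set P. lv x \<le> lv z"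
    using s unfolding same_def conn_def by auto
  have yc: "y \<in> carrier G" "y' \<in> carrier G" using adj_in a a' by auto
  have w1: "wb (carrier G) adj (y # P) y x'" using wb_Cons[OF P(1) adj_sym[OF a(1)]] yc by simp
  have w2: "wb (carrier G) adj [x', y'] x' y'" using a' adj_in by (simp add: wb_def)
  have wW: "wb (carrier G) adj ((y # P) @ tl [x', y']) y y'" by (rule wb_append[OF w1 w2])
  have lW: "\<forall>z\<in>set ((y # P) @ tl [x', y']). lv y \<le> lv z" using P(2) a a' same_lv[OF s] by auto
  have "lv y = lv y'" using a a' same_lv[OF s] by simp
  then show ?thesis using yc wW lW unfolding same_def conn_def by blast
qed

definition rep where "rep x = (SOME y. same x y)"
definition node where "node x = to_nat_on (carrier G) (rep x)"

lemma rep_same: "x \<in> carrier G \<Longrightarrow> same x (rep x)"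
  unfolding rep_def using same_refl by (rule someI)

lemma rep_eq: "same x y \<Longrightarrow> rep x = rep y"
proof -
  assume s: "same x y"
  have "same x = same y"
  proof
    fix z show "same x z = same y z" using s same_sym same_trans by blast
  qed
  then show ?thesis unfolding rep_def by simp
qed

lemma node_eq: "x \<in> carrier G \<Longrightarrow> y \<in> carrier G \<Longrightarrow> node x = node y \<longleftrightarrow> same x y"
proof
  assume xy: "x \<in> carrier G" "y \<in> carrier G" and e: "node x = node y"
  have r: "same x (rep x)" "same y (rep y)" using rep_same xy by auto
  have "rep x \<in> carrier G" "rep y \<in> carrier G" using r same_in by auto
  moreover have "inj_on (to_nat_on (carrier G)) (carrier G)" using countable_G by (rule inj_on_to_nat_on)
  ultimately have "rep x = rep y" using e unfolding node_def by (meson inj_onD)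
  then show "same x y" using r same_sym same_trans by metis
next
  assume "same x y" then show "node x = node y" unfolding node_def by (simp add: rep_eq)
qed

abbreviation "VT \<equiv> node ` carrier G"
definition rx where "rx u = inv_into (carrier G) node u"

lemma rx: "u \<in> VT \<Longrightarrow> rx u \<in> carrier G \<and> node (rx u) = u"
  unfolding rx_def by (simp add: inv_into_into f_inv_into_f)

definition levT where "levT u = lv (rx u)"
definition parT where "parT u = (if lv (rx u) = 0 then u else node (pred (rx u)))"

lemma rx_same: "x \<in> carrier G \<Longrightarrow> same (rx (node x)) x"
  using rx[of "node x"] node_eq by blast

lemma levT_node: "x \<in> carrier G \<Longrightarrow> levT (node x) = lv x"
  unfolding levT_def using rx_same same_lv by blast

lemma parT_node:
  assumes xc: "x \<in> carrier G" and pos: "0 < lv x" and a: "adj x y" "Suc (lv y) = lv x"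
  shows "parT (node x) = node y"
proof -
  define x0 where "x0 = rx (node x)"
  have s: "same x0 x" using rx_same xc x0_def by simp
  have x0c: "x0 \<in> carrier G" using s same_in by blast
  have l0: "lv x0 = lv x" using same_lv[OF s] .
  have p: "adj x0 (pred x0) \<and> Suc (lv (pred x0)) = lv x0" using pred_ex x0c l0 pos by simp
  have "same (pred x0) y" using par_same[OF s] p a by blast
  then have "node (pred x0) = node y" using node_eq same_in by blast
  then show ?thesis unfolding parT_def x0_def[symmetric] using l0 pos by simp
qed

sublocale T: ptree VT levT parT "node \<one>"
proof
  show "node \<one> \<in> VT" by simp
  show "levT (node \<one>) = 0" using levT_node by simp
  then show "parT (node \<one>) = node \<one>" unfolding parT_def levT_def by simp
  fix u assume u: "u \<in> VT"
  have rxu: "rx u \<in> carrier G" "node (rx u) = u" using rx[OF u] by auto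
  show "parT u \<in> VT"
  proof (cases "lv (rx u) = 0")
    case True then show ?thesis using u unfolding parT_def by simp
  next
    case False then show ?thesis unfolding parT_def using pred_in rxu by simp
  qed
  show "levT u = 0 \<Longrightarrow> u = node \<one>"
  proof -
    assume "levT u = 0"
    then have "rx u = \<one>" using X.gd_zero[OF one_closed rxu(1)] unfolding levT_def by simp
    then show ?thesis using rxu by simp
  qed
  show "0 < levT u \<Longrightarrow> Suc (levT (parT u)) = levT u"
  proof -
    assume pos: "0 < levT u"
    then have "parT u = node (pred (rx u))" unfolding parT_def levT_def by simp
    moreover have "Suc (lv (pred (rx u))) = lv (rx u)" using pred_ex rxu pos unfolding levT_def by simp
    ultimately show ?thesis using levT_node pred_in rxu pos unfolding levT_def by (metis levT_def)
  qed
qed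

sublocale TC: cgraph VT T.PE by (rule T.cg)

abbreviation "gT \<equiv> graph_dist VT T.PE"

lemma node_adj: "adj x y \<Longrightarrow> node x = node y \<or> T.PE (node x) (node y)"
proof -
  assume a: "adj x y"
  have xy: "x \<in> carrier G" "y \<in> carrier G" using adj_in a by auto
  have l1: "lv y \<le> Suc (lv x)" "lv x \<le> Suc (lv y)" using adj_lv a adj_sym by blast+
  consider "lv x = lv y" | "Suc (lv x) = lv y" | "Suc (lv y) = lv x" using l1 by linarith
  then show ?thesis
  proof cases
    case 1
    have "wb (carrier G) adj [x, y] x y" using a xy by (simp add: wb_def)
    then have "same x y" using 1 xy unfolding same_def conn_def by (intro conjI exI[of _ "[x, y]"]) auto
    then show ?thesis using node_eq xy by blast
  next
    case 2
    have "parT (node y) = node x" using parT_node[OF xy(2) _ adj_sym[OF a] 2] 2 by simp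
    moreover have "0 < levT (node y)" using levT_node xy 2 by simp
    ultimately have "T.PE (node y) (node x)" using xy unfolding T.PE_def by simp
    then show ?thesis using T.PE_sym by blast
  next
    case 3
    have "parT (node x) = node y" using parT_node[OF xy(1) _ a 3] 3 by simp
    moreover have "0 < levT (node x)" using levT_node xy 3 by simp
    ultimately show ?thesis using xy unfolding T.PE_def by simp
  qed
qed

lemma gT_le: "wb (carrier G) adj xs x y \<Longrightarrow> gT (node x) (node y) \<le> length xs - 1"
proof (induction xs arbitrary: x rule: induct_list012)
  case 1 then show ?case by (simp add: wb_def)
next
  case (2 z)
  then have "x = y" "x \<in> carrier G" by (auto simp: wb_def)
  then show ?case using TC.gd_refl[of "node x"] by simp
next
  case (3 z z' zs)
  have a: "adj x z'" "x = z" using "3.prems" by (auto simp: wb_def)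
  have w: "wb (carrier G) adj (z' # zs) z' y" using "3.prems" by (simp add: wb_def)
  have IH: "gT (node z') (node y) \<le> length zs" using "3.IH"(2)[OF w] by simp
  have c: "x \<in> carrier G" "z' \<in> carrier G" "y \<in> carrier G" using adj_in a wb_in[OF w] by auto
  have e: "gT (node x) (node z') \<le> 1" using node_adj[OF a(1)] TC.gd_edge TC.gd_refl c by fastforce
  have "gT (node x) (node y) \<le> gT (node x) (node z') + gT (node z') (node y)"
    using TC.gd_tri c by blast
  then show ?case using e IH by simp
qed

lemma class_adj: "T.PE (node x) (node x') \<Longrightarrow> x \<in> carrier G \<Longrightarrow> x' \<in> carrier G \<Longrightarrow> dX x x' \<le> D + 1"
proof -
  have one: "dX x x' \<le> D + 1" if e: "0 < levT (node x)" "node x' = parT (node x)"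
    and c: "x \<in> carrier G" "x' \<in> carrier G" for x x'
  proof -
    have pos: "0 < lv x" using e levT_node c by simp
    have p: "adj x (pred x)" "Suc (lv (pred x)) = lv x" using pred_ex c pos by auto
    have pc: "pred x \<in> carrier G" using pred_in c pos by simp
    have "node x' = node (pred x)" using e parT_node[OF c(1) pos p] by simp
    then have "same x' (pred x)" using node_eq c pc by blast
    then have "dX x' (pred x) \<le> D" by (rule same_diam)
    moreover have "dX x (pred x) \<le> 1" using X.gd_edge[OF p(1)] .
    moreover have "dX x x' \<le> dX x (pred x) + dX (pred x) x'" using dX_tri c pc by blast
    ultimately show ?thesis using dX_sym[OF pc c(2)] by simp
  qed
  assume e: "T.PE (node x) (node x')" and c: "x \<in> carrier G" "x' \<in> carrier G"
  then have "(0 < levT (node x) \<and> node x' = parT (node x)) \<or> (0 < levT (node x') \<and> node x = parT (node x'))"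
    unfolding T.PE_def by simp
  then show ?thesis
  proof (elim disjE conjE)
    assume "0 < levT (node x)" "node x' = parT (node x)"
    then show ?thesis using one c by blast
  next
    assume "0 < levT (node x')" "node x = parT (node x')"
    then show ?thesis using one[of x' x] c dX_sym by simp
  qed
qed

lemma dX_le: "wb VT T.PE ys u v \<Longrightarrow> node x = u \<Longrightarrow> node y = v \<Longrightarrow> x \<in> carrier G \<Longrightarrow> y \<in> carrier G \<Longrightarrow>
   dX x y \<le> (D + 1) * (length ys - 1) + D"
proof (induction ys arbitrary: x u rule: induct_list012)
  case 1 then show ?case by (simp add: wb_def)
next
  case (2 z)
  then have "node x = node y" by (simp add: wb_def)
  then have "same x y" using node_eq "2.prems" by blast
  then show ?case using same_diam by simp
next
  case (3 z z' zs)
  have e: "T.PE z z'" "u = z" using "3.prems" by (auto simp: wb_def)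
  have w: "wb VT T.PE (z' # zs) z' v" using "3.prems" by (simp add: wb_def)
  have "z' \<in> VT" using wb_in[OF w] by simp
  then obtain x' where x': "x' \<in> carrier G" "node x' = z'" by blast
  have IH: "dX x' y \<le> (D + 1) * length zs + D" using "3.IH"(2)[OF w x'(2)] "3.prems" x' by simp
  have "dX x x' \<le> D + 1" using class_adj e "3.prems" x' by simp
  moreover have "dX x y \<le> dX x x' + dX x' y" using dX_tri "3.prems" x' by blast
  ultimately show ?case using IH by simp
qed

lemma qi: "qi_to_tree G S"
  unfolding qi_to_tree_def
proof (intro exI conjI)
  show "is_tree VT T.PE" by (rule T.is_tree)
  show "quasi_isometric (carrier G) (\<lambda>g h. real (cayley_dist G S g h)) VT (\<lambda>u v. real (gT u v))"
    unfolding quasi_isometric_def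
  proof (intro exI conjI ballI)
    show "node ` carrier G \<subseteq> VT" by simp
    show "(1::real) \<le> real D + 1" by simp
    show "(0::real) \<le> real D" by simp
    fix x y assume xy: "x \<in> carrier G" "y \<in> carrier G"
    obtain xs where xs: "wb (carrier G) adj xs x y" "length xs = Suc (dX x y)" using X.gd_ex xy by blast
    have up: "gT (node x) (node y) \<le> dX x y" using gT_le[OF xs(1)] xs(2) by simp
    obtain ys where ys: "wb VT T.PE ys (node x) (node y)" "length ys = Suc (gT (node x) (node y))"
      using TC.gd_ex xy by blast
    have lo: "dX x y \<le> (D + 1) * gT (node x) (node y) + D" using dX_le[OF ys(1) refl refl xy] ys(2) by simp
    have cd: "cayley_dist G S x y = dX x y" using cdist_eq xy by simp
    show "real (cayley_dist G S x y) / (real D + 1) - real D \<le> real (gT (node x) (node y))"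
    proof -
      have "real (dX x y) \<le> (real D + 1) * real (gT (node x) (node y)) + real D"
        using lo by (metis of_nat_add of_nat_le_iff of_nat_mult of_nat_1)
      then have "real (dX x y) / (real D + 1) \<le> ((real D + 1) * real (gT (node x) (node y)) + real D) / (real D + 1)"
        by (intro divide_right_mono) auto
      also have "\<dots> = real (gT (node x) (node y)) + real D / (real D + 1)"
        by (simp add: add_divide_distrib)
      finally have "real (dX x y) / (real D + 1) \<le> real (gT (node x) (node y)) + real D / (real D + 1)" .
      moreover have "real D / (real D + 1) \<le> real D" by (simp add: field_simps)
      ultimately show ?thesis using cd by simp
    qed
    show "real (gT (node x) (node y)) \<le> (real D + 1) * real (cayley_dist G S x y) + real D"
      using up cd by (simp add: algebra_simps) (smt (verit) of_nat_le_iff of_nat_0_le_iff mult_nonneg_nonneg)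
  next
    fix z assume "z \<in> VT"
    then obtain x where "x \<in> carrier G" "z = node x" by blast
    then have "gT z (node x) = 0" using TC.gd_refl[of "node x"] by simp
    then show "\<exists>x\<in>carrier G. real (gT z (node x)) \<le> real D" using \<open>x \<in> carrier G\<close> by (intro bexI[of _ x]) auto
  qed
qed

end

context cay begin

lemma chordal_imp_qi: "chordal G S i0 k m \<Longrightarrow> qi_to_tree G S"
proof -
  assume "chordal G S i0 k m"
  then obtain \<Delta> where BN: "\<forall>x w y xs. x \<in> carrier G \<longrightarrow> w \<in> carrier G \<longrightarrow> y \<in> carrier G \<longrightarrow>
     dX x w + dX w y = dX x y \<longrightarrow> wb (carrier G) adj xs x y \<longrightarrow> (\<exists>p\<in>set xs. dX p w \<le> \<Delta>)"
    using bottleneck by blast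
  interpret B: cayB G S \<Delta> by unfold_locales (use BN in blast)
  show ?thesis by (rule B.qi)
qed

end

theorem corollary2:
  fixes G :: "('g, 'b) monoid_scheme" and S :: "'g set"
  assumes "group G" and "finite S" and "S \<subseteq> carrier G"
    and "generate G S = carrier G"
  shows "qi_to_tree G S \<longleftrightarrow> (\<exists>i0 k m. chordal G S i0 k m)"
proof -
  interpret C: cay G S using assms by (intro cay.intro cay_axioms.intro) auto
  show ?thesis using C.qi_imp_chordal C.chordal_imp_qi by blast
qed



end
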